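(* For every $n\ge1$ there exist an MSSP instance with two agents and a profile $\pi\in\Pi_{n+1}$ such that $\mathbb{E}_\pi[\textit{MHit}]<\inf_{\pi'\in\Pi_n}\mathbb{E}_{\pi'}[\textit{MHit}]$. Furthermore, for every MSSP instance with $k$ agents and every $\varepsilon>0$ there exists a finite-memory profile $\pi$ that is $\varepsilon$-optimal, i.e. $\mathbb{E}_\pi[\textit{MHit}]\le\inf_{\pi'\in\Pi}\mathbb{E}_{\pi'}[\textit{MHit}]+\varepsilon$.
   Context: An MDP is a triple $M=(S,\textit{Act},P)$ with finite sets $S$, $\textit{Act}$ and $P:S\times\textit{Act}\times S\to[0,1]$ such that for each $s$ the set $\textit{En}(s)$ of enabled actions (those $a$ with $\sum_t P(s,a,t)=1$) is nonempty. An MSSP instance consists of an MDP $M$, a number $k\ge1$ of agents, and for each agent $i$ an initial state $\iota_i\in S$ and target set $T_i\subseteq S$ with $\iota_i\notin T_i\neq\emptyset$. In the autonomous setting each agent $i$ uses its own strategy $\sigma_i$ in $M$ which depends only on agent $i$'s own history; the strategy is given by a set $\mathit{Mem}_i$ of memory states, a (randomized) initial memory, a randomized rule choosing an enabled action from the current state and memory state, and a randomized memory-update rule; agents evolve independently, agent $i$ starting in $\iota_i$. A tuple $\pi=(\sigma_1,\dots,\sigma_k)$ is an (autonomous) profile; it is finite-memory if all $\mathit{Mem}_i$ are finite. $\Pi$ is the class of all autonomous profiles and $\Pi_n$ the class of profiles with $|\mathit{Mem}_i|\le n$ for all $i$. $\textit{MHit}$ is the first time step at which some agent $i$ is in a state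 of $T_i$ ($\infty$ if never), and $\mathbb{E}_\pi[\textit{MHit}]$ is its expectation under $\pi$. *)

theory Defs
  imports "HOL-Probability.Probability_Mass_Function"
begin

text \<open>An MDP is given by a finite state set S, a finite action set Act and
  P :: state => action => state => real (only values on S x Act x S matter).\<close>

definition enabled :: "'s set \<Rightarrow> 'a set \<Rightarrow> ('s \<Rightarrow> 'a \<Rightarrow> 's \<Rightarrow> real) \<Rightarrow> 's \<Rightarrow> 'a set" where
  "enabled S Act P s = {a \<in> Act. (\<Sum>t\<in>S. P s a t) = 1}"

definition is_mdp :: "'s set \<Rightarrow> 'a set \<Rightarrow> ('s \<Rightarrow> 'a \<Rightarrow> 's \<Rightarrow> real) \<Rightarrow> bool" where
  "is_mdp S Act P \<longleftrightarrow> finite S \<and> finite Act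
     \<and> (\<forall>s\<in>S. \<forall>a\<in>Act. \<forall>t\<in>S. 0 \<le> P s a t \<and> P s a t \<le> 1)
     \<and> (\<forall>s\<in>S. enabled S Act P s \<noteq> {})"

definition is_mssp :: "'s set \<Rightarrow> 'a set \<Rightarrow> ('s \<Rightarrow> 'a \<Rightarrow> 's \<Rightarrow> real) \<Rightarrow> nat
     \<Rightarrow> (nat \<Rightarrow> 's) \<Rightarrow> (nat \<Rightarrow> 's set) \<Rightarrow> bool" where
  "is_mssp S Act P k iota T \<longleftrightarrow> is_mdp S Act P \<and> k \<ge> 1
     \<and> (\<forall>i<k. iota i \<in> S \<and> T i \<subseteq> S \<and> iota i \<notin> T i \<and> T i \<noteq> {})"

definition trans_pmf :: "'s set \<Rightarrow> ('s \<Rightarrow> 'a \<Rightarrow> 's \<Rightarrow> real) \<Rightarrow> 's \<Rightarrow> 'a \<Rightarrow> 's pmf" where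
  "trans_pmf S P s a = embed_pmf (\<lambda>t. if t \<in> S then P s a t else 0)"

record ('s, 'a, 'm) strat =
  mem :: "'m set"
  init :: "'m pmf"
  act :: "'s \<Rightarrow> 'm \<Rightarrow> 'a pmf"
  upd :: "'m \<Rightarrow> 's \<Rightarrow> 'm pmf"      \<comment> \<open>randomized memory update on the new state\<close>

definition valid_strat :: "'s set \<Rightarrow> 'a set \<Rightarrow> ('s \<Rightarrow> 'a \<Rightarrow> 's \<Rightarrow> real)
     \<Rightarrow> ('s, 'a, 'm) strat \<Rightarrow> bool" where
  "valid_strat S Act P \<sigma> \<longleftrightarrow> set_pmf (init \<sigma>) \<subseteq> mem \<sigma>
     \<and> (\<forall>s\<in>S. \<forall>m\<in>mem \<sigma>. set_pmf (act \<sigma> s m) \<subseteq> enabled S Act P s)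
     \<and> (\<forall>m\<in>mem \<sigma>. \<forall>s\<in>S. set_pmf (upd \<sigma> m s) \<subseteq> mem \<sigma>)"

definition valid_profile :: "'s set \<Rightarrow> 'a set \<Rightarrow> ('s \<Rightarrow> 'a \<Rightarrow> 's \<Rightarrow> real) \<Rightarrow> nat
     \<Rightarrow> (nat \<Rightarrow> ('s, 'a, 'm) strat) \<Rightarrow> bool" where
  "valid_profile S Act P k \<pi> \<longleftrightarrow> (\<forall>i<k. valid_strat S Act P (\<pi> i))"

text \<open>Profiles in Pi_n: every memory set has at most n elements.\<close>
definition mem_bounded :: "nat \<Rightarrow> nat \<Rightarrow> (nat \<Rightarrow> ('s, 'a, 'm) strat) \<Rightarrow> bool" where
  "mem_bounded n k \<pi> \<longleftrightarrow> (\<forall>i<k. finite (mem (\<pi> i)) \<and> card (mem (\<pi> i)) \<le> n)"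

definition finite_memory :: "nat \<Rightarrow> (nat \<Rightarrow> ('s, 'a, 'm) strat) \<Rightarrow> bool" where
  "finite_memory k \<pi> \<longleftrightarrow> (\<forall>i<k. finite (mem (\<pi> i)))"

text \<open>Distribution of the agent's (state, memory) at time t, where None means
  that the agent has already visited its target at some time \<le> t.\<close>
fun agent_dist :: "'s set \<Rightarrow> ('s \<Rightarrow> 'a \<Rightarrow> 's \<Rightarrow> real) \<Rightarrow> 's \<Rightarrow> 's set
     \<Rightarrow> ('s, 'a, 'm) strat \<Rightarrow> nat \<Rightarrow> ('s \<times> 'm) option pmf" where
  "agent_dist S P \<iota> Tg \<sigma> 0 =
     map_pmf (\<lambda>m. if \<iota> \<in> Tg then None else Some (\<iota>, m)) (init \<sigma>)"
| "agent_dist S P \<iota> Tg \<sigma> (Suc t) =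
     bind_pmf (agent_dist S P \<iota> Tg \<sigma> t) (\<lambda>x. case x of
        None \<Rightarrow> return_pmf None
      | Some (s, m) \<Rightarrow>
          bind_pmf (act \<sigma> s m) (\<lambda>a.
          bind_pmf (trans_pmf S P s a) (\<lambda>s'.
          map_pmf (\<lambda>m'. if s' \<in> Tg then None else Some (s', m')) (upd \<sigma> m s'))))"

definition survive :: "'s set \<Rightarrow> ('s \<Rightarrow> 'a \<Rightarrow> 's \<Rightarrow> real) \<Rightarrow> 's \<Rightarrow> 's set
     \<Rightarrow> ('s, 'a, 'm) strat \<Rightarrow> nat \<Rightarrow> real" where
  "survive S P \<iota> Tg \<sigma> t = 1 - pmf (agent_dist S P \<iota> Tg \<sigma> t) None"

text \<open>Agents evolve independently, so Pr[MHit > t] is the product of the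
  individual survival probabilities, and for the N u {\<infinity>}-valued MHit,
  E[MHit] = sum over t \<ge> 0 of Pr[MHit > t] (value in ennreal, may be \<infinity>).\<close>
definition prob_MHit_gt :: "'s set \<Rightarrow> ('s \<Rightarrow> 'a \<Rightarrow> 's \<Rightarrow> real) \<Rightarrow> nat
     \<Rightarrow> (nat \<Rightarrow> 's) \<Rightarrow> (nat \<Rightarrow> 's set) \<Rightarrow> (nat \<Rightarrow> ('s, 'a, 'm) strat) \<Rightarrow> nat \<Rightarrow> real" where
  "prob_MHit_gt S P k iota T \<pi> t = (\<Prod>i<k. survive S P (iota i) (T i) (\<pi> i) t)"

definition E_MHit :: "'s set \<Rightarrow> ('s \<Rightarrow> 'a \<Rightarrow> 's \<Rightarrow> real) \<Rightarrow> nat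
     \<Rightarrow> (nat \<Rightarrow> 's) \<Rightarrow> (nat \<Rightarrow> 's set) \<Rightarrow> (nat \<Rightarrow> ('s, 'a, 'm) strat) \<Rightarrow> ennreal" where
  "E_MHit S P k iota T \<pi> = (\<Sum>t. ennreal (prob_MHit_gt S P k iota T \<pi> t))"

end

theory Submission
  imports Defs
begin

lemma trans_pmf_pmf:
  assumes mdp: "is_mdp S Act P" and s: "s \<in> S" and a: "a \<in> enabled S Act P s"
  shows "pmf (trans_pmf S P s a) t = (if t \<in> S then P s a t else 0)"
proof -
  have fin: "finite S" and aA: "a \<in> Act" and sum1: "(\<Sum>t\<in>S. P s a t) = 1"
    using mdp a unfolding is_mdp_def enabled_def by auto
  have nn: "\<And>t. 0 \<le> (if t \<in> S then P s a t else 0)"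
    using mdp s aA unfolding is_mdp_def by auto
  have "(\<integral>\<^sup>+t. ennreal (if t \<in> S then P s a t else 0) \<partial>count_space UNIV)
        = (\<Sum>t\<in>S. ennreal (if t \<in> S then P s a t else 0))"
    by (rule nn_integral_count_space'[OF fin]) auto
  also have "\<dots> = (\<Sum>t\<in>S. ennreal (P s a t))"
    by (rule sum.cong) auto
  also have "\<dots> = ennreal (\<Sum>t\<in>S. P s a t)"
    using mdp s aA unfolding is_mdp_def by (subst sum_ennreal) auto
  also have "\<dots> = 1" using sum1 by simp
  finally have "(\<integral>\<^sup>+t. ennreal (if t \<in> S then P s a t else 0) \<partial>count_space UNIV) = 1" .
  then show ?thesis
    unfolding trans_pmf_def using nn by (subst pmf_embed_pmf) auto
qed

lemma set_trans_pmf: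
  assumes mdp: "is_mdp S Act P" and s: "s \<in> S" and a: "a \<in> enabled S Act P s"
  shows "set_pmf (trans_pmf S P s a) \<subseteq> S"
  using trans_pmf_pmf[OF assms] by (auto simp: set_pmf_eq split: if_splits)

lemma agent_dist_support:
  assumes mdp: "is_mdp S Act P" and v: "valid_strat S Act P \<sigma>" and i: "\<iota> \<in> S"
  shows "set_pmf (agent_dist S P \<iota> Tg \<sigma> t) \<subseteq> insert None (Some ` (S \<times> mem \<sigma>))"
proof (induction t)
  case 0
  then show ?case using v i unfolding valid_strat_def by auto
next
  case (Suc t)
  show ?case
  proof
    fix y assume "y \<in> set_pmf (agent_dist S P \<iota> Tg \<sigma> (Suc t))"
    then obtain x where x: "x \<in> set_pmf (agent_dist S P \<iota> Tg \<sigma> t)"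
      and y: "y \<in> set_pmf (case x of None \<Rightarrow> return_pmf None
      | Some (s, m) \<Rightarrow>
          bind_pmf (act \<sigma> s m) (\<lambda>a.
          bind_pmf (trans_pmf S P s a) (\<lambda>s'.
          map_pmf (\<lambda>m'. if s' \<in> Tg then None else Some (s', m')) (upd \<sigma> m s'))))"
      by auto
    show "y \<in> insert None (Some ` (S \<times> mem \<sigma>))"
    proof (cases x)
      case None then show ?thesis using y by auto
    next
      case (Some sm)
      obtain s m where sm: "sm = (s, m)" by force
      have sS: "s \<in> S" and mM: "m \<in> mem \<sigma>" using Suc x Some sm by auto
      from y Some sm obtain a s' m' where
        a: "a \<in> set_pmf (act \<sigma> s m)" and s': "s' \<in> set_pmf (trans_pmf S P s a)"
        and m': "m' \<in> set_pmf (upd \<sigma> m s')"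
        and yy: "y = (if s' \<in> Tg then None else Some (s', m'))"
        by (auto split: if_splits)
      have aE: "a \<in> enabled S Act P s" using v sS mM a unfolding valid_strat_def by auto
      have s'S: "s' \<in> S" using set_trans_pmf[OF mdp sS aE] s' by auto
      have "m' \<in> mem \<sigma>" using v mM s'S m' unfolding valid_strat_def by blast
      then show ?thesis using yy s'S by auto
    qed
  qed
qed

definition stepf :: "'s set \<Rightarrow> ('s \<Rightarrow> 'a \<Rightarrow> 's \<Rightarrow> real) \<Rightarrow> 's set
     \<Rightarrow> ('s, 'a, 'm) strat \<Rightarrow> ('s \<times> 'm) option \<Rightarrow> ('s \<times> 'm) option pmf" where
  "stepf S P Tg \<sigma> x = (case x of
        None \<Rightarrow> return_pmf None
      | Some (s, m) \<Rightarrow>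
          bind_pmf (act \<sigma> s m) (\<lambda>a.
          bind_pmf (trans_pmf S P s a) (\<lambda>s'.
          map_pmf (\<lambda>m'. if s' \<in> Tg then None else Some (s', m')) (upd \<sigma> m s'))))"

lemma agent_dist_Suc2:
  "agent_dist S P \<iota> Tg \<sigma> (Suc t) = bind_pmf (agent_dist S P \<iota> Tg \<sigma> t) (stepf S P Tg \<sigma>)"
proof -
  have "stepf S P Tg \<sigma> = (\<lambda>x. case x of
        None \<Rightarrow> return_pmf None
      | Some (s, m) \<Rightarrow>
          bind_pmf (act \<sigma> s m) (\<lambda>a.
          bind_pmf (trans_pmf S P s a) (\<lambda>s'.
          map_pmf (\<lambda>m'. if s' \<in> Tg then None else Some (s', m')) (upd \<sigma> m s'))))"
    by (rule ext) (simp add: stepf_def)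
  then show ?thesis by simp
qed

lemma stepf_None[simp]: "stepf S P Tg \<sigma> None = return_pmf None"
  by (simp add: stepf_def)

lemma pmf_agent_Suc:
  assumes "finite X" "set_pmf (agent_dist S P \<iota> Tg \<sigma> t) \<subseteq> X"
  shows "pmf (agent_dist S P \<iota> Tg \<sigma> (Suc t)) y
     = (\<Sum>x\<in>X. pmf (stepf S P Tg \<sigma> x) y * pmf (agent_dist S P \<iota> Tg \<sigma> t) x)"
  unfolding agent_dist_Suc2 pmf_bind using assms
  by (intro integral_measure_pmf_real) auto

lemma pmf_stepf_Some:
  assumes mdp: "is_mdp S Act P" and v: "valid_strat S Act P \<sigma>" and s: "s \<in> S" and m: "m \<in> mem \<sigma>"
  shows "pmf (stepf S P Tg \<sigma> (Some (s, m))) y =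
    (\<Sum>a\<in>Act. pmf (act \<sigma> s m) a * (\<Sum>s'\<in>S. P s a s' *
        pmf (map_pmf (\<lambda>m'. if s' \<in> Tg then None else Some (s', m')) (upd \<sigma> m s')) y))"
proof -
  have finA: "finite Act" and finS: "finite S" using mdp unfolding is_mdp_def by auto
  have actE: "set_pmf (act \<sigma> s m) \<subseteq> enabled S Act P s" using v s m unfolding valid_strat_def by auto
  have "pmf (stepf S P Tg \<sigma> (Some (s, m))) y =
     (\<Sum>a\<in>Act. pmf (bind_pmf (trans_pmf S P s a) (\<lambda>s'.
          map_pmf (\<lambda>m'. if s' \<in> Tg then None else Some (s', m')) (upd \<sigma> m s'))) y * pmf (act \<sigma> s m) a)"
    unfolding stepf_def using finA actE
    by (simp add: pmf_bind) (intro integral_measure_pmf_real, auto simp: enabled_def)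
  also have "\<dots> = (\<Sum>a\<in>Act. pmf (act \<sigma> s m) a * (\<Sum>s'\<in>S. P s a s' *
        pmf (map_pmf (\<lambda>m'. if s' \<in> Tg then None else Some (s', m')) (upd \<sigma> m s')) y))"
  proof (intro sum.cong refl)
    fix a assume aA: "a \<in> Act"
    show "pmf (bind_pmf (trans_pmf S P s a) (\<lambda>s'.
          map_pmf (\<lambda>m'. if s' \<in> Tg then None else Some (s', m')) (upd \<sigma> m s'))) y * pmf (act \<sigma> s m) a
       = pmf (act \<sigma> s m) a * (\<Sum>s'\<in>S. P s a s' *
        pmf (map_pmf (\<lambda>m'. if s' \<in> Tg then None else Some (s', m')) (upd \<sigma> m s')) y)"
    proof (cases "a \<in> set_pmf (act \<sigma> s m)")
      case False then show ?thesis by (simp add: set_pmf_iff)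
    next
      case True
      then have aE: "a \<in> enabled S Act P s" using actE by auto
      have "pmf (bind_pmf (trans_pmf S P s a) (\<lambda>s'.
          map_pmf (\<lambda>m'. if s' \<in> Tg then None else Some (s', m')) (upd \<sigma> m s'))) y
        = (\<Sum>s'\<in>S. pmf (map_pmf (\<lambda>m'. if s' \<in> Tg then None else Some (s', m')) (upd \<sigma> m s')) y
             * pmf (trans_pmf S P s a) s')"
        unfolding pmf_bind using finS set_trans_pmf[OF mdp s aE]
        by (intro integral_measure_pmf_real) auto
      also have "\<dots> = (\<Sum>s'\<in>S. P s a s' *
        pmf (map_pmf (\<lambda>m'. if s' \<in> Tg then None else Some (s', m')) (upd \<sigma> m s')) y)"
        by (intro sum.cong refl) (simp add: trans_pmf_pmf[OF mdp s aE])
      finally show ?thesis by simp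
    qed
  qed
  finally show ?thesis .
qed

lemma set_stepf_Some:
  assumes mdp: "is_mdp S Act P" and v: "valid_strat S Act P \<sigma>" and s: "s \<in> S" and m: "m \<in> mem \<sigma>"
    and y: "y \<in> set_pmf (stepf S P Tg \<sigma> (Some (s, m)))"
  shows "\<exists>a\<in>set_pmf (act \<sigma> s m). a \<in> enabled S Act P s \<and> (\<exists>s'\<in>S. P s a s' \<noteq> 0 \<and>
           (\<exists>m'\<in>mem \<sigma>. y = (if s' \<in> Tg then None else Some (s', m'))))"
proof -
  from y obtain a s' m' where
    a: "a \<in> set_pmf (act \<sigma> s m)" and s': "s' \<in> set_pmf (trans_pmf S P s a)"
    and m': "m' \<in> set_pmf (upd \<sigma> m s')"
    and yy: "y = (if s' \<in> Tg then None else Some (s', m'))"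
    by (auto simp: stepf_def split: if_splits)
  have aE: "a \<in> enabled S Act P s" using v s m a unfolding valid_strat_def by auto
  have s'S: "s' \<in> S" using set_trans_pmf[OF mdp s aE] s' by auto
  have "P s a s' \<noteq> 0" using s' trans_pmf_pmf[OF mdp s aE, of s'] s'S by (auto simp: set_pmf_iff)
  moreover have "m' \<in> mem \<sigma>" using v m s'S m' unfolding valid_strat_def by blast
  ultimately show ?thesis using a aE s'S yy by blast
qed

lemma pmf_map_Some_pair:
  "pmf (map_pmf (\<lambda>m'. Some (s', m')) q) y =
     (case y of None \<Rightarrow> 0 | Some (s'', m'') \<Rightarrow> if s'' = s' then pmf q m'' else 0)"
proof (cases y)
  case None then show ?thesis by (auto simp: pmf_eq_0_set_pmf)
next
  case (Some p)
  obtain s'' m'' where p: "p = (s'', m'')" by force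
  show ?thesis
  proof (cases "s'' = s'")
    case True
    have "inj (\<lambda>m'. Some (s', m'))" by (auto simp: inj_def)
    then have "pmf (map_pmf (\<lambda>m'. Some (s', m')) q) ((\<lambda>m'. Some (s', m')) m'') = pmf q m''"
      by (rule pmf_map_inj')
    then show ?thesis using Some p True by simp
  next
    case False then show ?thesis using Some p by (auto simp: pmf_eq_0_set_pmf)
  qed
qed

lemma survive_nonneg: "0 \<le> survive S P \<iota> Tg \<sigma> t"
  unfolding survive_def using pmf_le_1 by (simp)

lemma survive_le1: "survive S P \<iota> Tg \<sigma> t \<le> 1"
  unfolding survive_def by (simp add: pmf_nonneg)

lemma pmf_None_mono_Suc:
  "pmf (agent_dist S P \<iota> Tg \<sigma> t) None \<le> pmf (agent_dist S P \<iota> Tg \<sigma> (Suc t)) None"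
proof -
  let ?d = "agent_dist S P \<iota> Tg \<sigma> t"
  let ?f = "\<lambda>x. case x of None \<Rightarrow> return_pmf None
      | Some (s, m) \<Rightarrow>
          bind_pmf (act \<sigma> s m) (\<lambda>a.
          bind_pmf (trans_pmf S P s a) (\<lambda>s'.
          map_pmf (\<lambda>m'. if s' \<in> Tg then None else Some (s', m')) (upd \<sigma> m s')))"
  have "pmf ?d None = measure_pmf.expectation ?d (\<lambda>x. indicator {None} x)"
    by (simp add: measure_pmf_single)
  also have "\<dots> \<le> measure_pmf.expectation ?d (\<lambda>x. pmf (?f x) None)"
    by (intro integral_mono_AE) (auto simp: pmf_nonneg pmf_le_1 split: option.splits
       intro!: measure_pmf.integrable_const_bound[where B=1])
  also have "\<dots> = pmf (agent_dist S P \<iota> Tg \<sigma> (Suc t)) None"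
    by (simp add: pmf_bind)
  finally show ?thesis .
qed

lemma survive_antimono:
  assumes "t \<le> t'" shows "survive S P \<iota> Tg \<sigma> t' \<le> survive S P \<iota> Tg \<sigma> t"
  using assms
proof (induction t' rule: dec_induct)
  case base then show ?case by simp
next
  case (step n) then show ?case
    using pmf_None_mono_Suc[of S P \<iota> Tg \<sigma> n] unfolding survive_def by linarith
qed

fun pw :: "'m set \<Rightarrow> ('m \<Rightarrow> 'm \<Rightarrow> real) \<Rightarrow> nat \<Rightarrow> 'm \<Rightarrow> 'm \<Rightarrow> real" where
  "pw M K 0 i j = (if i = j then 1 else 0)"
| "pw M K (Suc t) i j = (\<Sum>l\<in>M. pw M K t i l * K l j)"

fun nr :: "'m set \<Rightarrow> ('m \<Rightarrow> 'm \<Rightarrow> real) \<Rightarrow> 'm \<Rightarrow> nat \<Rightarrow> 'm \<Rightarrow> real" where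
  "nr M K i 0 j = (if j = i then 1 else 0)"
| "nr M K i (Suc t) j = (if j = i then 0 else (\<Sum>l\<in>M. nr M K i t l * K l j))"

lemma sum_ind1: "finite M \<Longrightarrow> i \<in> M \<Longrightarrow> (\<Sum>l\<in>M. (if i = l then 1 else 0) * f l) = (f i::real)"
proof -
  assume "finite M" "i \<in> M"
  have "(\<Sum>l\<in>M. (if i = l then 1 else 0) * f l) = (\<Sum>l\<in>M. if i = l then f l else 0)"
    by (rule sum.cong) auto
  then show ?thesis using \<open>finite M\<close> \<open>i \<in> M\<close> by (simp add: sum.delta)
qed

lemma sum_ind2: "finite M \<Longrightarrow> i \<in> M \<Longrightarrow> (\<Sum>l\<in>M. f l * (if l = i then 1 else 0)) = (f i::real)"
proof -
  assume "finite M" "i \<in> M"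
  have "(\<Sum>l\<in>M. f l * (if l = i then 1 else 0)) = (\<Sum>l\<in>M. if i = l then f l else 0)"
    by (rule sum.cong) auto
  then show ?thesis using \<open>finite M\<close> \<open>i \<in> M\<close> by (simp add: sum.delta)
qed

locale kern =
  fixes K :: "'m \<Rightarrow> 'm \<Rightarrow> real"
  assumes K_nonneg: "\<And>l j. 0 \<le> K l j"
begin

lemma pw_nonneg: "0 \<le> pw M K t i j"
  by (induction t arbitrary: j) (auto intro!: sum_nonneg mult_nonneg_nonneg K_nonneg)

lemma nr_nonneg: "0 \<le> nr M K i t j"
  by (induction t arbitrary: j) (auto intro!: sum_nonneg mult_nonneg_nonneg K_nonneg)

lemma pw_first:
  assumes "i \<in> M" "j \<in> M" and fin: "finite M"
  shows "pw M K (Suc t) i j = (\<Sum>l\<in>M. K i l * pw M K t l j)"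
  using assms
proof (induction t arbitrary: j)
  case 0
  have "(\<Sum>l\<in>M. (if i = l then 1 else 0) * K l j) = K i j"
    using sum_ind1[OF fin 0(1), of "\<lambda>l. K l j"] by simp
  moreover have "(\<Sum>l\<in>M. K i l * (if l = j then 1 else 0)) = K i j"
    using 0 fin by (intro sum_ind2) auto
  ultimately show ?case by simp
next
  case (Suc t)
  have "pw M K (Suc (Suc t)) i j = (\<Sum>l\<in>M. (\<Sum>l'\<in>M. K i l' * pw M K t l' l) * K l j)"
    using Suc by (simp del: pw.simps(2) add: pw.simps(2)[of M K "Suc t"])
  also have "\<dots> = (\<Sum>l'\<in>M. K i l' * (\<Sum>l\<in>M. pw M K t l' l * K l j))"
    by (simp add: sum_distrib_left sum_distrib_right mult.assoc) (rule sum.swap)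
  also have "\<dots> = (\<Sum>l'\<in>M. K i l' * pw M K (Suc t) l' j)" by simp
  finally show ?case .
qed

lemma decomp:
  "pw M K t i j = (\<Sum>r\<le>t. pw M K r i i * nr M K i (t - r) j)"
proof (induction t arbitrary: j)
  case 0 then show ?case by simp
next
  case (Suc t)
  have "pw M K (Suc t) i j = (\<Sum>l\<in>M. (\<Sum>r\<le>t. pw M K r i i * nr M K i (t - r) l) * K l j)"
    using Suc by simp
  also have "\<dots> = (\<Sum>r\<le>t. pw M K r i i * (\<Sum>l\<in>M. nr M K i (t - r) l * K l j))"
    by (simp add: sum_distrib_left sum_distrib_right mult.assoc) (rule sum.swap)
  finally have eq: "pw M K (Suc t) i j = (\<Sum>r\<le>t. pw M K r i i * (\<Sum>l\<in>M. nr M K i (t - r) l * K l j))" .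
  show ?case
  proof (cases "j = i")
    case True
    have "(\<Sum>r\<le>Suc t. pw M K r i i * nr M K i (Suc t - r) j) =
          pw M K (Suc t) i i * nr M K i 0 j + (\<Sum>r\<le>t. pw M K r i i * nr M K i (Suc t - r) j)"
      by (simp add: add.commute)
    also have "(\<Sum>r\<le>t. pw M K r i i * nr M K i (Suc t - r) j) = 0"
      using True by (intro sum.neutral) (auto simp: Suc_diff_le)
    finally show ?thesis using True by simp
  next
    case False
    have "(\<Sum>r\<le>Suc t. pw M K r i i * nr M K i (Suc t - r) j) =
          pw M K (Suc t) i i * nr M K i 0 j + (\<Sum>r\<le>t. pw M K r i i * nr M K i (Suc t - r) j)"
      by (simp add: add.commute)
    also have "\<dots> = (\<Sum>r\<le>t. pw M K r i i * nr M K i (Suc t - r) j)" using False by simp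
    also have "\<dots> = (\<Sum>r\<le>t. pw M K r i i * (\<Sum>l\<in>M. nr M K i (t - r) l * K l j))"
      using False by (intro sum.cong) (auto simp: Suc_diff_le)
    finally show ?thesis using eq by simp
  qed
qed

lemma nr_le_pw: "nr M K i t j \<le> pw M K t i j"
proof (induction t arbitrary: j)
  case 0 then show ?case by simp
next
  case (Suc t)
  have "(\<Sum>l\<in>M. nr M K i t l * K l j) \<le> (\<Sum>l\<in>M. pw M K t i l * K l j)"
    by (intro sum_mono mult_right_mono Suc K_nonneg)
  then show ?case using pw_nonneg[of M "Suc t" i j] by auto
qed

lemma nr_restrict:
  assumes "i \<in> M" "j \<in> M - {i}" and fin: "finite M"
  shows "nr M K i (Suc s) j = (\<Sum>l\<in>M - {i}. K i l * pw (M - {i}) K s l j)"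
  using assms
proof (induction s arbitrary: j)
  case 0
  have "(\<Sum>l\<in>M. (if l = i then 1 else 0) * K l j) = K i j"
    using 0 fin sum_ind1[of M i "\<lambda>l. K l j"] by (simp add: eq_commute)
  moreover have "(\<Sum>l\<in>M - {i}. K i l * (if l = j then 1 else 0)) = K i j"
    using 0 fin by (intro sum_ind2) auto
  ultimately show ?case using 0 by simp
next
  case (Suc s)
  have fin_or: "True" ..
  have "nr M K i (Suc (Suc s)) j = (\<Sum>l\<in>M. nr M K i (Suc s) l * K l j)"
    using Suc by simp
  also have "\<dots> = (\<Sum>l\<in>M - {i}. nr M K i (Suc s) l * K l j)"
  proof (cases "finite M")
    case True
    then show ?thesis using Suc.prems
      by (subst sum.remove[of M i]) auto
  next
    case False then show ?thesis by simp
  qed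
  also have "\<dots> = (\<Sum>l\<in>M - {i}. (\<Sum>l'\<in>M - {i}. K i l' * pw (M - {i}) K s l' l) * K l j)"
    using Suc by (intro sum.cong) auto
  also have "\<dots> = (\<Sum>l'\<in>M - {i}. K i l' * (\<Sum>l\<in>M - {i}. pw (M - {i}) K s l' l * K l j))"
    by (simp add: sum_distrib_left sum_distrib_right mult.assoc) (rule sum.swap)
  also have "\<dots> = (\<Sum>l'\<in>M - {i}. K i l' * pw (M - {i}) K (Suc s) l' j)" by simp
  finally show ?case .
qed

lemma pw_rowsum:
  assumes rs: "\<And>l. l \<in> M \<Longrightarrow> (\<Sum>j\<in>M. K l j) \<le> 1" and i: "i \<in> M"
  shows "(\<Sum>j\<in>M. pw M K t i j) \<le> 1"
proof (induction t)
  case 0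
  show ?case using i by (cases "finite M") (simp_all add: if_distrib cong: if_cong)
next
  case (Suc t)
  have "(\<Sum>j\<in>M. pw M K (Suc t) i j) = (\<Sum>l\<in>M. pw M K t i l * (\<Sum>j\<in>M. K l j))"
    by (simp add: sum_distrib_left) (rule sum.swap)
  also have "\<dots> \<le> (\<Sum>l\<in>M. pw M K t i l * 1)"
    by (intro sum_mono mult_left_mono rs pw_nonneg) auto
  finally show ?case using Suc by simp
qed

lemma pw_le1:
  assumes rs: "\<And>l. l \<in> M \<Longrightarrow> (\<Sum>j\<in>M. K l j) \<le> 1" and i: "i \<in> M" and j: "j \<in> M"
    and fin: "finite M"
  shows "pw M K t i j \<le> 1"
proof -
  have "pw M K t i j \<le> (\<Sum>j\<in>M. pw M K t i j)"
    using fin j by (intro member_le_sum pw_nonneg) auto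
  also have "\<dots> \<le> 1" by (rule pw_rowsum[OF rs i])
  finally show ?thesis .
qed

lemma pw_mono_set:
  assumes "M' \<subseteq> M" "finite M"
  shows "pw M' K t i j \<le> pw M K t i j"
proof (induction t arbitrary: j)
  case 0 then show ?case by simp
next
  case (Suc t)
  have "(\<Sum>l\<in>M'. pw M' K t i l * K l j) \<le> (\<Sum>l\<in>M'. pw M K t i l * K l j)"
    by (intro sum_mono mult_right_mono Suc K_nonneg)
  also have "\<dots> \<le> (\<Sum>l\<in>M. pw M K t i l * K l j)"
    using assms by (intro sum_mono2) (auto intro!: mult_nonneg_nonneg pw_nonneg K_nonneg)
  finally show ?case by simp
qed

theorem pigeon:
  assumes "finite M" "card M \<le> n" "1 \<le> n" "i \<in> M" "j \<in> M"
    and rs: "\<And>l. l \<in> M \<Longrightarrow> (\<Sum>j\<in>M. K l j) \<le> 1"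
  shows "pw M K n i j \<le> real n * (\<Sum>k<n. pw M K k i j)"
  using assms
proof (induction n arbitrary: M i j)
  case 0 then show ?case by simp
next
  case (Suc n)
  note fin = Suc.prems(1)
  let ?M' = "M - {i}"
  have sumk: "(\<Sum>k<Suc n. pw M K k i j) = pw M K 0 i j + (\<Sum>k<n. pw M K (Suc k) i j)"
    by (rule sum.lessThan_Suc_shift)
  have dec: "pw M K (Suc n) i j = nr M K i (Suc n) j + (\<Sum>r<Suc n. pw M K (Suc r) i i * nr M K i (n - r) j)"
  proof -
    have "pw M K (Suc n) i j = (\<Sum>r\<le>Suc n. pw M K r i i * nr M K i (Suc n - r) j)"
      by (rule decomp)
    also have "\<dots> = pw M K 0 i i * nr M K i (Suc n) j + (\<Sum>r<Suc n. pw M K (Suc r) i i * nr M K i (Suc n - Suc r) j)"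
      by (subst sum.atMost_Suc_shift) (simp add: lessThan_Suc_atMost)
    finally show ?thesis by simp
  qed
  have second: "(\<Sum>r<Suc n. pw M K (Suc r) i i * nr M K i (n - r) j) \<le> (\<Sum>k<Suc n. pw M K k i j)"
  proof -
    have "(\<Sum>r<Suc n. pw M K (Suc r) i i * nr M K i (n - r) j) \<le> (\<Sum>r<Suc n. pw M K (n - r) i j)"
    proof (intro sum_mono)
      fix r assume "r \<in> {..<Suc n}"
      have "pw M K (Suc r) i i * nr M K i (n - r) j \<le> 1 * nr M K i (n - r) j"
        by (intro mult_right_mono pw_le1[OF Suc.prems(6)] Suc.prems nr_nonneg fin) 
      also have "\<dots> \<le> pw M K (n - r) i j" using nr_le_pw by simp
      finally show "pw M K (Suc r) i i * nr M K i (n - r) j \<le> pw M K (n - r) i j" .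
    qed
    also have "(\<Sum>r<Suc n. pw M K (n - r) i j) = (\<Sum>k<Suc n. pw M K k i j)"
      by (rule sum.reindex_bij_witness[where i="\<lambda>k. n - k" and j="\<lambda>k. n - k"]) auto
    finally show ?thesis .
  qed
  have first: "nr M K i (Suc n) j \<le> real n * (\<Sum>k<Suc n. pw M K k i j)"
  proof (cases "j = i")
    case True then show ?thesis
      by (simp add: sum_nonneg pw_nonneg)
  next
    case False
    have jM': "j \<in> ?M'" using False Suc.prems by auto
    have eqnr: "nr M K i (Suc n) j = (\<Sum>l\<in>?M'. K i l * pw ?M' K n l j)"
      using nr_restrict[OF Suc.prems(4) jM' fin] .
    show ?thesis
    proof (cases "n = 0")
      case True
      have "card ?M' = 0" using Suc.prems True by (simp add: card_Diff_singleton)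
      then have "?M' = {}" using fin by simp
      then show ?thesis using jM' by blast
    next
      case False
      have IH: "\<And>l. l \<in> ?M' \<Longrightarrow> pw ?M' K n l j \<le> real n * (\<Sum>k<n. pw ?M' K k l j)"
      proof -
        fix l assume l: "l \<in> ?M'"
        show "pw ?M' K n l j \<le> real n * (\<Sum>k<n. pw ?M' K k l j)"
        proof (rule Suc.IH)
          show "finite ?M'" using fin by simp
          show "card ?M' \<le> n" using Suc.prems by (simp add: card_Diff_singleton)
          show "1 \<le> n" using False by simp
          show "l \<in> ?M'" "j \<in> ?M'" using l jM' by auto
          fix l' assume "l' \<in> ?M'"
          then have "(\<Sum>j\<in>?M'. K l' j) \<le> (\<Sum>j\<in>M. K l' j)"
            using fin by (intro sum_mono2) (auto intro: K_nonneg)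
          also have "\<dots> \<le> 1" using Suc.prems(6) \<open>l' \<in> ?M'\<close> by auto
          finally show "(\<Sum>j\<in>?M'. K l' j) \<le> 1" .
        qed
      qed
      have "nr M K i (Suc n) j \<le> (\<Sum>l\<in>?M'. K i l * (real n * (\<Sum>k<n. pw ?M' K k l j)))"
        unfolding eqnr by (intro sum_mono mult_left_mono IH K_nonneg)
      also have "\<dots> = real n * (\<Sum>k<n. (\<Sum>l\<in>?M'. K i l * pw ?M' K k l j))"
        by (simp add: sum_distrib_left mult.left_commute) (rule sum.swap)
      also have "\<dots> = real n * (\<Sum>k<n. nr M K i (Suc k) j)"
        using nr_restrict[OF Suc.prems(4) jM' fin] by simp
      also have "\<dots> \<le> real n * (\<Sum>k<n. pw M K (Suc k) i j)"
        by (intro mult_left_mono sum_mono nr_le_pw) auto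
      also have "\<dots> \<le> real n * (\<Sum>k<Suc n. pw M K k i j)"
        unfolding sumk by (intro mult_left_mono) (auto simp: pw_nonneg)
      finally show ?thesis .
    qed
  qed
  have "pw M K (Suc n) i j \<le> real n * (\<Sum>k<Suc n. pw M K k i j) + (\<Sum>k<Suc n. pw M K k i j)"
    using dec first second by linarith
  then show ?case by (simp add: algebra_simps)
qed

end

definition Vf :: "nat \<Rightarrow> nat \<Rightarrow> real" where
  "Vf n t = (if t \<le> n then 2 - (5/8) * (1/2)^(n - t) else if t = n + 1 then 1 else 0)"

definition Qa :: "nat \<Rightarrow> nat \<Rightarrow> real" where "Qa n t = 1 + Vf n (Suc t) / 2"
definition Qb :: "nat \<Rightarrow> nat \<Rightarrow> real" where "Qb n t = 1 + 3/8 * real (n + 1 - t)"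

definition adv :: "nat \<Rightarrow> (nat \<Rightarrow> real) \<Rightarrow> (nat \<Rightarrow> real) \<Rightarrow> nat \<Rightarrow> real" where
  "adv n a b t = (a t - b t) * (Qa n t - Vf n t) + b t * (Qb n t - Vf n t)"

lemma lin2: "(d::real) \<le> B/16 \<Longrightarrow> B/16 \<le> y \<Longrightarrow> bb \<le> aa \<Longrightarrow> d \<le> y + (aa - bb)/8"
  by (simp add: field_simps)

lemma lin3: "(d::real) \<le> h/16 \<Longrightarrow> B/16 \<le> y \<Longrightarrow> 0 \<le> B \<Longrightarrow> h/2 \<le> aa - bb \<Longrightarrow> d \<le> y + (aa - bb)/8"
  by (simp add: field_simps)

lemma lin_helper: "(x::real) = v + y + z \<Longrightarrow> c \<le> y + z \<Longrightarrow> v + c \<le> x"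
  by linarith

locale seqs =
  fixes n :: nat and a b s :: "nat \<Rightarrow> real"
  assumes a0: "a 0 = 1" and s0: "s 0 = 1"
    and aS: "\<And>t. a (Suc t) = (a t - b t) / 2"
    and sS: "\<And>t. s (Suc t) = s t - a t / 2 - b t / 8"
begin

lemma identity:
  assumes "k \<le> n + 2"
  shows "(\<Sum>t'\<in>{n + 2 - k..<n + 2}. s t') =
     a (n + 2 - k) * Vf n (n + 2 - k) + (s (n + 2 - k) - a (n + 2 - k)) * real k
     + (\<Sum>t'\<in>{n + 2 - k..<n + 2}. adv n a b t')"
  using assms
proof (induction k)
  case 0
  then show ?case by (simp add: Vf_def)
next
  case (Suc k)
  define t where "t = n + 2 - Suc k"
  have t1: "n + 2 - k = Suc t" using Suc.prems unfolding t_def by simp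
  have tlt: "t < n + 2" using Suc.prems unfolding t_def by simp
  have iv: "{t..<n + 2} = insert t {Suc t..<n + 2}" using tlt by auto
  have IH: "(\<Sum>t'\<in>{Suc t..<n + 2}. s t') =
     a (Suc t) * Vf n (Suc t) + (s (Suc t) - a (Suc t)) * real k
     + (\<Sum>t'\<in>{Suc t..<n + 2}. adv n a b t')"
  proof -
    have kle: "k \<le> n + 2" using Suc.prems by simp
    show ?thesis using Suc.IH[OF kle] unfolding t1 .
  qed
  have rk: "real (n + 1 - t) = real k"
    using Suc.prems unfolding t_def by simp
  have "(\<Sum>t'\<in>{t..<n + 2}. s t') = s t + (\<Sum>t'\<in>{Suc t..<n + 2}. s t')"
    unfolding iv by simp
  also have "\<dots> = a t * Vf n t + (s t - a t) * real (Suc k)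
     + (adv n a b t + (\<Sum>t'\<in>{Suc t..<n + 2}. adv n a b t'))"
    unfolding IH aS sS adv_def Qa_def Qb_def rk by (simp add: field_simps)
  also have "\<dots> = a t * Vf n t + (s t - a t) * real (Suc k)
     + (\<Sum>t'\<in>{t..<n + 2}. adv n a b t')"
    unfolding iv by simp
  finally show ?case unfolding t_def .
qed

lemma total: "(\<Sum>t<n + 2. s t) = Vf n 0 + (\<Sum>t<n + 2. adv n a b t)"
  using identity[of "n + 2"] by (simp add: a0 s0 lessThan_atLeast0)

lemma adv_small: "t < n \<Longrightarrow> adv n a b t = b t * (Qb n t - Vf n t)"
proof -
  assume tn: "t < n"
  have e: "n - t = Suc (n - Suc t)" using tn by simp
  have "Qa n t = Vf n t"
    unfolding Qa_def Vf_def using tn by (simp add: e)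

  then show ?thesis unfolding adv_def by simp
qed

lemma adv_n: "adv n a b n = (a n - b n) / 8"
  unfolding adv_def Qa_def Qb_def Vf_def by simp

lemma adv_n1: "adv n a b (Suc n) = 0"
  unfolding adv_def Qa_def Qb_def Vf_def by simp

lemma gap: assumes "t < n" shows "Qb n t - Vf n t \<ge> 1/16"
proof -
  define j where "j = n - t"
  have j1: "j \<ge> 1" using assms unfolding j_def by simp
  have r: "real (n + 1 - t) = real j + 1" using assms unfolding j_def by simp
  have "Qb n t - Vf n t = 3/8 * (real j + 1) - 1 + 5/8 * (1/2)^j"
    unfolding Qb_def Vf_def r using assms by (simp add: j_def)
  also have "\<dots> \<ge> 1/16"
  proof (cases "j = 1")
    case True then show ?thesis by simp
  next
    case False
    then have "real j \<ge> 2" using j1 by simp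
    then have "3/8 * (real j + 1) \<ge> (9/8::real)" by simp
    moreover have "(0::real) \<le> 5/8 * (1/2)^j" by simp
    ultimately show ?thesis by linarith
  qed
  finally show ?thesis .
qed

lemma total_split: "(\<Sum>t<n + 2. s t) = Vf n 0 + (\<Sum>t<n. adv n a b t) + (a n - b n) / 8"
  using total by (simp add: adv_n adv_n1)

lemma good:
  assumes "\<And>t. t < n \<Longrightarrow> b t = 0" "b n = a n"
  shows "(\<Sum>t<n + 2. s t) = Vf n 0"
  using total_split assms by (simp add: adv_small)

lemma a_lower:
  assumes bnn: "\<And>t. 0 \<le> b t"
  shows "a t \<ge> (1/2)^t - (\<Sum>k<t. b k)"
proof (induction t)
  case 0 then show ?case by (simp add: a0)
next
  case (Suc t)
  have "0 \<le> (\<Sum>k<t. b k)" by (intro sum_nonneg bnn)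
  then show ?case using Suc bnn[of t] by (simp add: aS)
qed

lemma lower:
  assumes bnn: "\<And>t. 0 \<le> b t" and ba: "\<And>t. b t \<le> a t"
    and pig: "b n \<le> real n * (\<Sum>k<n. b k)"
  shows "(\<Sum>t<n + 2. s t) \<ge> Vf n 0 + (1/2)^n / (32 * (real n + 1))"
proof -
  define B where "B = (\<Sum>k<n. b k)"
  have B0: "0 \<le> B" unfolding B_def by (intro sum_nonneg bnn)
  have "(\<Sum>t<n. adv n a b t) = (\<Sum>t<n. b t * (Qb n t - Vf n t))"
    by (intro sum.cong) (auto simp: adv_small)
  also have "\<dots> \<ge> (\<Sum>t<n. b t * (1/16))"
    by (intro sum_mono mult_left_mono gap bnn) auto
  moreover have "B / 16 = (\<Sum>t<n. b t * (1/16))"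
    unfolding B_def sum_distrib_right[symmetric] by simp
  ultimately have A1: "(\<Sum>t<n. adv n a b t) \<ge> B / 16" by simp
  have an: "a n \<ge> (1/2)^n - B" using a_lower[OF bnn] unfolding B_def by simp
  have pos: "(0::real) < (1/2)^n" by simp
  have np: "real n + 1 \<ge> 1" by simp
  show ?thesis
  proof (cases "B \<ge> (1/2)^n / (2 * (real n + 1))")
    case True
    have "(1/2)^n / (32 * (real n + 1)) = ((1/2)^n / (2 * (real n + 1))) / 16"
      by (simp add: field_simps)
    also have "\<dots> \<le> B / 16" using True by (intro divide_right_mono) auto
    finally have F: "(1/2)^n / (32 * (real n + 1)) \<le> B / 16" .
    have "b n \<le> a n" by (rule ba)
    then have "(1/2)^n / (32 * (real n + 1)) \<le> (\<Sum>t<n. adv n a b t) + (a n - b n) / 8"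
      using A1 F by (intro lin2)
    then show ?thesis using total_split by (intro lin_helper) auto
  next
    case False
    have H: "B < (1/2)^n / (2 * (real n + 1))" using False by (simp only: not_le)
    have c: "0 < 2 * (real n + 1)" by simp
    have "B * (2 * (real n + 1)) < (1/2)^n" using H pos_less_divide_eq[OF c] by blast
    then have "(real n + 1) * B < (1/2)^n / 2" by (simp add: algebra_simps)
    then have "a n - b n \<ge> (1/2)^n / 2" using an pig unfolding B_def[symmetric]
      by (simp add: algebra_simps)
    moreover have "(1/2)^n / (32 * (real n + 1)) \<le> (1/2)^n / 16"
      using np pos by (intro divide_left_mono) auto
    ultimately have "(1/2)^n / (32 * (real n + 1)) \<le> (\<Sum>t<n. adv n a b t) + (a n - b n) / 8"
      using A1 B0 by (intro lin3[of _ "(1/2)^n" B]) auto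
    then show ?thesis using total_split by (intro lin_helper) auto
  qed
qed

end

definition dl :: "nat \<Rightarrow> real \<Rightarrow> nat \<Rightarrow> real" where
  "dl c x t = (if t = c then x else 0)"

definition P1 :: "nat \<Rightarrow> nat \<Rightarrow> nat \<Rightarrow> nat \<Rightarrow> real" where
  "P1 n s a t = (if s = 0 \<and> a = 0 then dl 0 (1/2) t + dl 1 (1/2) t
     else if s = 0 \<and> a = 1 then dl 1 (5/8) t + dl 2 (3/8) t
     else if a = 0 then (if 3 \<le> s \<and> s < n + 5 then dl (s + 1) 1 t else dl s 1 t) else 0)"

definition S1 :: "nat \<Rightarrow> nat set" where "S1 n = {..n + 5}"
definition Act1 :: "nat set" where "Act1 = {0, 1}"
definition iota1 :: "nat \<Rightarrow> nat" where "iota1 i = (if i = 0 then 0 else 3)"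
definition T1 :: "nat \<Rightarrow> nat \<Rightarrow> nat set" where "T1 n i = (if i = 0 then {1} else {n + 5})"

lemma sum_dl: "finite A \<Longrightarrow> (\<Sum>t\<in>A. dl c x t * F t) = (if c \<in> A then x * F c else 0)"
proof -
  assume "finite A"
  have "(\<Sum>t\<in>A. dl c x t * F t) = (\<Sum>t\<in>A. if c = t then x * F t else 0)"
    by (rule sum.cong) (auto simp: dl_def)
  then show ?thesis using \<open>finite A\<close> by (simp add: sum.delta)
qed

lemma sum_dl1: "finite A \<Longrightarrow> (\<Sum>t\<in>A. dl c x t) = (if c \<in> A then x else 0)"
  using sum_dl[of A c x "\<lambda>_. 1"] by simp

lemma finS1[simp]: "finite (S1 n)" by (simp add: S1_def)

lemma sumP1:
  "(\<Sum>t\<in>S1 n. P1 n s a t * F t) =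
     (if s = 0 \<and> a = 0 then (F 0 + F 1) / 2
      else if s = 0 \<and> a = 1 then 5/8 * F 1 + 3/8 * F 2
      else if a = 0 then (if 3 \<le> s \<and> s < n + 5 then F (s + 1) else if s \<in> S1 n then F s else 0) else 0)"
  unfolding P1_def
  by (auto simp: distrib_right sum.distrib sum_dl S1_def)

lemma sumP1':
  "(\<Sum>t\<in>S1 n. P1 n s a t) =
     (if s = 0 \<and> a = 0 then 1
      else if s = 0 \<and> a = 1 then 1
      else if a = 0 then (if 3 \<le> s \<and> s < n + 5 then 1 else if s \<in> S1 n then 1 else 0) else 0)"
  using sumP1[of n s a "\<lambda>_. 1"] by simp

lemma enabled1:
  assumes "s \<in> S1 n"
  shows "enabled (S1 n) Act1 (P1 n) s = (if s = 0 then {0, 1} else {0})"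
  using assms unfolding enabled_def Act1_def by (auto simp: sumP1')

lemma mdp1: "is_mdp (S1 n) Act1 (P1 n)"
proof -
  have "\<forall>s\<in>S1 n. enabled (S1 n) Act1 (P1 n) s \<noteq> {}" using enabled1 by auto
  moreover have "\<forall>s\<in>S1 n. \<forall>a\<in>Act1. \<forall>t\<in>S1 n. 0 \<le> P1 n s a t \<and> P1 n s a t \<le> 1"
    unfolding P1_def dl_def by auto
  ultimately show ?thesis unfolding is_mdp_def by (simp add: Act1_def)
qed

lemma mssp1: "is_mssp (S1 n) Act1 (P1 n) 2 iota1 (T1 n)"
  unfolding is_mssp_def using mdp1
  by (auto simp: iota1_def T1_def S1_def less_Suc_eq)

section \<open>Agent 2: forced chain\<close>

lemma ag2_supp:
  assumes v: "valid_strat (S1 n) Act1 (P1 n) \<sigma>" and t: "t < n + 2"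
  shows "set_pmf (agent_dist (S1 n) (P1 n) 3 {n + 5} \<sigma> t) \<subseteq> Some ` ({3 + t} \<times> mem \<sigma>)"
  using t
proof (induction t)
  case 0 then show ?case using v unfolding valid_strat_def by auto
next
  case (Suc t)
  show ?case
  proof
    fix y assume "y \<in> set_pmf (agent_dist (S1 n) (P1 n) 3 {n + 5} \<sigma> (Suc t))"
    then obtain x where x: "x \<in> set_pmf (agent_dist (S1 n) (P1 n) 3 {n + 5} \<sigma> t)"
      and y: "y \<in> set_pmf (stepf (S1 n) (P1 n) {n + 5} \<sigma> x)"
      unfolding agent_dist_Suc2 by auto
    from Suc x obtain m where xm: "x = Some (3 + t, m)" and m: "m \<in> mem \<sigma>" by auto
    have sS: "3 + t \<in> S1 n" using Suc.prems by (simp add: S1_def)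
    from set_stepf_Some[OF mdp1 v sS m] y xm obtain a s' m' where
      a: "a \<in> enabled (S1 n) Act1 (P1 n) (3 + t)" and s': "s' \<in> S1 n" "P1 n (3 + t) a s' \<noteq> 0"
      and m': "m' \<in> mem \<sigma>" and yy: "y = (if s' \<in> {n + 5} then None else Some (s', m'))"
      by blast
    have "a = 0" using a enabled1[OF sS] by auto
    then have "s' = 4 + t" using s' Suc.prems by (auto simp: P1_def dl_def split: if_splits)
    then show "y \<in> Some ` ({3 + Suc t} \<times> mem \<sigma>)" using yy m' Suc.prems by auto
  qed
qed

lemma ag2_dead:
  assumes v: "valid_strat (S1 n) Act1 (P1 n) \<sigma>" and t: "n + 2 \<le> t"
  shows "set_pmf (agent_dist (S1 n) (P1 n) 3 {n + 5} \<sigma> t) \<subseteq> {None}"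
  using t
proof (induction t rule: dec_induct)
  case base
  show ?case
  proof
    fix y assume "y \<in> set_pmf (agent_dist (S1 n) (P1 n) 3 {n + 5} \<sigma> (n + 2))"
    moreover have e: "n + 2 = Suc (n + 1)" by simp
    ultimately have "y \<in> set_pmf (bind_pmf (agent_dist (S1 n) (P1 n) 3 {n + 5} \<sigma> (n + 1)) (stepf (S1 n) (P1 n) {n + 5} \<sigma>))"
      unfolding e agent_dist_Suc2 by simp
    then obtain x where x: "x \<in> set_pmf (agent_dist (S1 n) (P1 n) 3 {n + 5} \<sigma> (n + 1))"
      and y: "y \<in> set_pmf (stepf (S1 n) (P1 n) {n + 5} \<sigma> x)"
      by auto
    from ag2_supp[OF v, of "n + 1"] x obtain m where xm: "x = Some (n + 4, m)" and m: "m \<in> mem \<sigma>"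
      by auto
    have sS: "n + 4 \<in> S1 n" by (simp add: S1_def)
    from set_stepf_Some[OF mdp1 v sS m] y xm obtain a s' m' where
      a: "a \<in> enabled (S1 n) Act1 (P1 n) (n + 4)" and s': "s' \<in> S1 n" "P1 n (n + 4) a s' \<noteq> 0"
      and yy: "y = (if s' \<in> {n + 5} then None else Some (s', m'))"
      by blast
    have "a = 0" using a enabled1[OF sS] by auto
    then have "s' = n + 5" using s' by (auto simp: P1_def dl_def split: if_splits)
    then show "y \<in> {None}" using yy by auto
  qed
next
  case (step t)
  then show ?case unfolding agent_dist_Suc2 by auto
qed

lemma ag2_survive:
  assumes v: "valid_strat (S1 n) Act1 (P1 n) \<sigma>"
  shows "survive (S1 n) (P1 n) 3 {n + 5} \<sigma> t = (if t < n + 2 then 1 else 0)"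
proof (cases "t < n + 2")
  case True
  then have "pmf (agent_dist (S1 n) (P1 n) 3 {n + 5} \<sigma> t) None = 0"
    using ag2_supp[OF v True] by (auto simp: pmf_eq_0_set_pmf)
  then show ?thesis using True unfolding survive_def by simp
next
  case False
  then have "agent_dist (S1 n) (P1 n) 3 {n + 5} \<sigma> t = return_pmf None"
    using ag2_dead[OF v] by (simp add: set_pmf_subset_singleton)
  then show ?thesis using False unfolding survive_def by simp
qed

lemma sumX:
  assumes "finite M"
  shows "(\<Sum>x\<in>insert None (Some ` ({0::nat, 2} \<times> M)). f x)
     = f None + (\<Sum>m\<in>M. f (Some (0, m))) + (\<Sum>m\<in>M. f (Some (2, m)))"
proof -
  have "(\<Sum>x\<in>insert None (Some ` ({0::nat, 2} \<times> M)). f x) = f None + (\<Sum>x\<in>Some ` ({0::nat, 2} \<times> M). f x)"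
    using assms by (subst sum.insert) auto
  also have "(\<Sum>x\<in>Some ` ({0::nat, 2} \<times> M). f x) = (\<Sum>p\<in>{0::nat, 2} \<times> M. f (Some p))"
    by (subst sum.reindex) (auto simp: inj_on_def)
  also have "\<dots> = (\<Sum>s\<in>{0::nat, 2}. \<Sum>m\<in>M. f (Some (s, m)))"
    using assms by (subst sum.cartesian_product) (simp add: split_def)
  also have "\<dots> = (\<Sum>m\<in>M. f (Some (0, m))) + (\<Sum>m\<in>M. f (Some (2, m)))" by simp
  finally show ?thesis by (simp add: add.assoc)
qed

locale ag1 =
  fixes n :: nat and \<sigma> :: "(nat, nat, nat) strat"
  assumes v: "valid_strat (S1 n) Act1 (P1 n) \<sigma>" and finM: "finite (mem \<sigma>)"
begin

abbreviation d where "d t \<equiv> agent_dist (S1 n) (P1 n) 0 {1} \<sigma> t"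
definition A where "A t m = pmf (d t) (Some (0, m))"
definition al where "al m = pmf (act \<sigma> 0 m) 0"
definition be where "be m = pmf (act \<sigma> 0 m) 1"

lemma inS[simp]: "0 \<in> S1 n" "1 \<in> S1 n" "2 \<in> S1 n"
  by (auto simp: S1_def)

lemma actE: "s \<in> S1 n \<Longrightarrow> m \<in> mem \<sigma> \<Longrightarrow> set_pmf (act \<sigma> s m) \<subseteq> enabled (S1 n) Act1 (P1 n) s"
  using v unfolding valid_strat_def by blast

lemma act0: "m \<in> mem \<sigma> \<Longrightarrow> set_pmf (act \<sigma> 0 m) \<subseteq> {0, 1}"
  using actE[of 0 m] enabled1[of 0 n] by simp

lemma act2: "m \<in> mem \<sigma> \<Longrightarrow> set_pmf (act \<sigma> 2 m) \<subseteq> {0}"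
  using actE[of 2 m] enabled1[of 2 n] by simp

lemma al_be: "m \<in> mem \<sigma> \<Longrightarrow> al m + be m = 1"
  using sum_pmf_eq_1[of "{0::nat, 1}" "act \<sigma> 0 m"] act0 unfolding al_def be_def by simp

lemma act2_1: "m \<in> mem \<sigma> \<Longrightarrow> pmf (act \<sigma> 2 m) 1 = 0"
  using act2 by (auto simp: pmf_eq_0_set_pmf)

lemma upd_sum: "m \<in> mem \<sigma> \<Longrightarrow> s \<in> S1 n \<Longrightarrow> (\<Sum>m'\<in>mem \<sigma>. pmf (upd \<sigma> m s) m') = 1"
proof -
  assume "m \<in> mem \<sigma>" "s \<in> S1 n"
  then have "set_pmf (upd \<sigma> m s) \<subseteq> mem \<sigma>" using v unfolding valid_strat_def by blast
  then show ?thesis using finM by (intro sum_pmf_eq_1) auto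
qed

lemma supp1: "set_pmf (d t) \<subseteq> insert None (Some ` ({0, 2} \<times> mem \<sigma>))"
proof (induction t)
  case 0 then show ?case using v unfolding valid_strat_def by auto
next
  case (Suc t)
  show ?case
  proof
    fix y assume "y \<in> set_pmf (d (Suc t))"
    then obtain x where x: "x \<in> set_pmf (d t)"
      and y: "y \<in> set_pmf (stepf (S1 n) (P1 n) {1} \<sigma> x)"
      unfolding agent_dist_Suc2 by auto
    show "y \<in> insert None (Some ` ({0, 2} \<times> mem \<sigma>))"
    proof (cases x)
      case None then show ?thesis using y by simp
    next
      case (Some p)
      with Suc x obtain s m where p: "p = (s, m)" and s: "s = 0 \<or> s = 2" and m: "m \<in> mem \<sigma>"
        by auto
      have sS: "s \<in> S1 n" using s by auto
      from set_stepf_Some[OF mdp1 v sS m] y Some p obtain a s' m' where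
        a: "a \<in> enabled (S1 n) Act1 (P1 n) s" and s': "s' \<in> S1 n" "P1 n s a s' \<noteq> 0"
        and m': "m' \<in> mem \<sigma>" and yy: "y = (if s' \<in> {1} then None else Some (s', m'))"
        by blast
      have "s' = 0 \<or> s' = 1 \<or> s' = 2"
        using s a enabled1[OF sS] s' by (auto simp: P1_def dl_def split: if_splits)
      then show ?thesis using yy m' by auto
    qed
  qed
qed

lemma pmf_step0:
  assumes m: "m \<in> mem \<sigma>"
  shows "pmf (stepf (S1 n) (P1 n) {1} \<sigma> (Some (0, m))) (Some (0, m')) = al m / 2 * pmf (upd \<sigma> m 0) m'"
    and "pmf (stepf (S1 n) (P1 n) {1} \<sigma> (Some (0, m))) None = al m / 2 + 5/8 * be m"
proof -
  note e = pmf_stepf_Some[OF mdp1 v inS(1) m, where Tg="{1}"]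
  show "pmf (stepf (S1 n) (P1 n) {1} \<sigma> (Some (0, m))) (Some (0, m')) = al m / 2 * pmf (upd \<sigma> m 0) m'"
    unfolding e Act1_def sumP1 by (simp add: pmf_map_Some_pair al_def)
  show "pmf (stepf (S1 n) (P1 n) {1} \<sigma> (Some (0, m))) None = al m / 2 + 5/8 * be m"
    unfolding e Act1_def sumP1 by (simp add: pmf_map_Some_pair al_def be_def)
qed

lemma pmf_step2:
  assumes m: "m \<in> mem \<sigma>"
  shows "pmf (stepf (S1 n) (P1 n) {1} \<sigma> (Some (2, m))) (Some (0, m')) = 0"
    and "pmf (stepf (S1 n) (P1 n) {1} \<sigma> (Some (2, m))) None = 0"
proof -
  note e = pmf_stepf_Some[OF mdp1 v inS(3) m, where Tg="{1}"]
  show "pmf (stepf (S1 n) (P1 n) {1} \<sigma> (Some (2, m))) (Some (0, m')) = 0"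
    unfolding e Act1_def sumP1 by (simp add: pmf_map_Some_pair act2_1[OF m])
  show "pmf (stepf (S1 n) (P1 n) {1} \<sigma> (Some (2, m))) None = 0"
    unfolding e Act1_def sumP1 by (simp add: pmf_map_Some_pair act2_1[OF m])
qed

lemma RA: "A (Suc t) m' = (\<Sum>m\<in>mem \<sigma>. A t m * (al m / 2 * pmf (upd \<sigma> m 0) m'))"
proof -
  have "A (Suc t) m' = (\<Sum>x\<in>insert None (Some ` ({0, 2} \<times> mem \<sigma>)).
      pmf (stepf (S1 n) (P1 n) {1} \<sigma> x) (Some (0, m')) * pmf (d t) x)"
    unfolding A_def using finM by (intro pmf_agent_Suc supp1) auto
  also have "\<dots> = (\<Sum>m\<in>mem \<sigma>. A t m * (al m / 2 * pmf (upd \<sigma> m 0) m'))"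
  proof -
    have 1: "(\<Sum>m\<in>mem \<sigma>. pmf (stepf (S1 n) (P1 n) {1} \<sigma> (Some (0, m))) (Some (0, m')) * pmf (d t) (Some (0, m)))
      = (\<Sum>m\<in>mem \<sigma>. A t m * (al m / 2 * pmf (upd \<sigma> m 0) m'))"
      by (intro sum.cong refl) (simp only: pmf_step0 A_def, simp)
    have 2: "(\<Sum>m\<in>mem \<sigma>. pmf (stepf (S1 n) (P1 n) {1} \<sigma> (Some (2, m))) (Some (0, m')) * pmf (d t) (Some (2, m))) = 0"
      by (intro sum.neutral ballI) (simp only: pmf_step2 mult_zero_left)
    show ?thesis unfolding sumX[OF finM] 1 2 by simp
  qed
  finally show ?thesis .
qed

lemma RN: "pmf (d (Suc t)) None = pmf (d t) None + (\<Sum>m\<in>mem \<sigma>. A t m * (al m / 2 + 5/8 * be m))"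
proof -
  have "pmf (d (Suc t)) None = (\<Sum>x\<in>insert None (Some ` ({0, 2} \<times> mem \<sigma>)).
      pmf (stepf (S1 n) (P1 n) {1} \<sigma> x) None * pmf (d t) x)"
    using finM by (intro pmf_agent_Suc supp1) auto
  also have "\<dots> = pmf (d t) None + (\<Sum>m\<in>mem \<sigma>. A t m * (al m / 2 + 5/8 * be m))"
  proof -
    have 1: "(\<Sum>m\<in>mem \<sigma>. pmf (stepf (S1 n) (P1 n) {1} \<sigma> (Some (0, m))) None * pmf (d t) (Some (0, m)))
      = (\<Sum>m\<in>mem \<sigma>. A t m * (al m / 2 + 5/8 * be m))"
      by (intro sum.cong refl) (simp only: pmf_step0 A_def, simp)
    have 2: "(\<Sum>m\<in>mem \<sigma>. pmf (stepf (S1 n) (P1 n) {1} \<sigma> (Some (2, m))) None * pmf (d t) (Some (2, m))) = 0"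
      by (intro sum.neutral ballI) (simp only: pmf_step2 mult_zero_left)
    show ?thesis unfolding sumX[OF finM] 1 2 by simp
  qed
  finally show ?thesis .
qed

definition a where "a t = (\<Sum>m\<in>mem \<sigma>. A t m)"
definition b where "b t = (\<Sum>m\<in>mem \<sigma>. A t m * be m)"
definition s where "s t = survive (S1 n) (P1 n) 0 {1} \<sigma> t"

lemma A0: "A 0 m = pmf (init \<sigma>) m"
  unfolding A_def by (simp add: pmf_map_Some_pair)

lemma N0: "pmf (d 0) None = 0"
  by (simp add: pmf_map_Some_pair)

lemma init_sum: "(\<Sum>m\<in>mem \<sigma>. pmf (init \<sigma>) m) = 1"
  using v finM unfolding valid_strat_def by (intro sum_pmf_eq_1) auto

lemma A_nonneg: "0 \<le> A t m" unfolding A_def by simp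
lemma be_nonneg: "0 \<le> be m" unfolding be_def by simp
lemma al_nonneg: "0 \<le> al m" unfolding al_def by simp
lemma be_le1: "m \<in> mem \<sigma> \<Longrightarrow> be m \<le> 1" using al_be[of m] al_nonneg[of m] by simp
lemma al_le1: "m \<in> mem \<sigma> \<Longrightarrow> al m \<le> 1" using al_be[of m] be_nonneg[of m] by simp

lemma a_Suc: "a (Suc t) = (a t - b t) / 2"
proof -
  have "a (Suc t) = (\<Sum>m'\<in>mem \<sigma>. \<Sum>m\<in>mem \<sigma>. A t m * (al m / 2 * pmf (upd \<sigma> m 0) m'))"
    unfolding a_def RA ..
  also have "\<dots> = (\<Sum>m\<in>mem \<sigma>. A t m * al m / 2 * (\<Sum>m'\<in>mem \<sigma>. pmf (upd \<sigma> m 0) m'))"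
    by (subst sum.swap) (simp add: sum_distrib_left mult.assoc)
  also have "\<dots> = (\<Sum>m\<in>mem \<sigma>. A t m * (1 - be m) / 2)"
    by (intro sum.cong refl) (simp add: upd_sum al_be[symmetric])
  also have "\<dots> = (a t - b t) / 2"
    unfolding a_def b_def by (simp add: sum_divide_distrib[symmetric] sum_subtractf algebra_simps)
  finally show ?thesis .
qed

lemma s_Suc: "s (Suc t) = s t - a t / 2 - b t / 8"
proof -
  have "(\<Sum>m\<in>mem \<sigma>. A t m * (al m / 2 + 5/8 * be m)) = (\<Sum>m\<in>mem \<sigma>. A t m / 2 + A t m * be m / 8)"
  proof (intro sum.cong refl)
    fix m assume "m \<in> mem \<sigma>"
    then have e: "al m = 1 - be m" using al_be[of m] by simp
    show "A t m * (al m / 2 + 5/8 * be m) = A t m / 2 + A t m * be m / 8"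
      unfolding e by (simp add: field_simps)
  qed
  also have "\<dots> = a t / 2 + b t / 8"
    unfolding a_def b_def by (simp add: sum.distrib sum_divide_distrib[symmetric])
  finally show ?thesis unfolding s_def survive_def RN by simp
qed

lemma seqs: "seqs a b s"
proof
  show "a 0 = 1" unfolding a_def A0 by (rule init_sum)
  show "s 0 = 1" unfolding s_def survive_def N0 by simp
  show "\<And>t. a (Suc t) = (a t - b t) / 2" by (rule a_Suc)
  show "\<And>t. s (Suc t) = s t - a t / 2 - b t / 8" by (rule s_Suc)
qed

lemma b_nonneg: "0 \<le> b t"
  unfolding b_def by (intro sum_nonneg mult_nonneg_nonneg A_nonneg be_nonneg)

lemma b_le_a: "b t \<le> a t"
  unfolding a_def b_def by (intro sum_mono) (use A_nonneg be_le1 in \<open>auto intro: mult_left_le\<close>)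

definition K where "K l j = al l / 2 * pmf (upd \<sigma> l 0) j"

lemma kernK: "kern K"
  by standard (simp add: K_def al_nonneg)

lemma K_rows: "l \<in> mem \<sigma> \<Longrightarrow> (\<Sum>j\<in>mem \<sigma>. K l j) \<le> 1"
proof -
  assume l: "l \<in> mem \<sigma>"
  have "(\<Sum>j\<in>mem \<sigma>. K l j) = al l / 2 * (\<Sum>j\<in>mem \<sigma>. pmf (upd \<sigma> l 0) j)"
    unfolding K_def by (simp add: sum_distrib_left)
  also have "\<dots> = al l / 2" using upd_sum[OF l inS(1)] by simp
  finally show ?thesis using al_le1[OF l] by simp
qed

lemma A_pw: "m' \<in> mem \<sigma> \<Longrightarrow> A t m' = (\<Sum>i\<in>mem \<sigma>. pmf (init \<sigma>) i * pw (mem \<sigma>) K t i m')"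
proof (induction t arbitrary: m')
  case 0
  then show ?case using sum_ind2[OF finM 0, of "pmf (init \<sigma>)"] by (simp add: A0)
next
  case (Suc t)
  have "A (Suc t) m' = (\<Sum>m\<in>mem \<sigma>. A t m * K m m')"
    unfolding RA K_def ..
  also have "\<dots> = (\<Sum>m\<in>mem \<sigma>. (\<Sum>i\<in>mem \<sigma>. pmf (init \<sigma>) i * pw (mem \<sigma>) K t i m) * K m m')"
    using Suc.IH by (intro sum.cong refl) auto
  also have "\<dots> = (\<Sum>m\<in>mem \<sigma>. \<Sum>i\<in>mem \<sigma>. pmf (init \<sigma>) i * pw (mem \<sigma>) K t i m * K m m')"
    by (simp add: sum_distrib_right)
  also have "\<dots> = (\<Sum>i\<in>mem \<sigma>. \<Sum>m\<in>mem \<sigma>. pmf (init \<sigma>) i * pw (mem \<sigma>) K t i m * K m m')"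
    by (rule sum.swap)
  also have "\<dots> = (\<Sum>i\<in>mem \<sigma>. pmf (init \<sigma>) i * pw (mem \<sigma>) K (Suc t) i m')"
    by (simp add: sum_distrib_left mult.assoc)
  finally show ?case .
qed

lemma pig:
  assumes "card (mem \<sigma>) \<le> n" "1 \<le> n"
  shows "b n \<le> real n * (\<Sum>k<n. b k)"
proof -
  interpret kern K by (rule kernK)
  have An: "A n j \<le> real n * (\<Sum>k<n. A k j)" if j: "j \<in> mem \<sigma>" for j
  proof -
    have "A n j = (\<Sum>i\<in>mem \<sigma>. pmf (init \<sigma>) i * pw (mem \<sigma>) K n i j)" using A_pw[OF j] .
    also have "\<dots> \<le> (\<Sum>i\<in>mem \<sigma>. pmf (init \<sigma>) i * (real n * (\<Sum>k<n. pw (mem \<sigma>) K k i j)))"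
      by (intro sum_mono mult_left_mono pigeon[OF finM assms] j K_rows) auto
    also have "\<dots> = real n * (\<Sum>k<n. \<Sum>i\<in>mem \<sigma>. pmf (init \<sigma>) i * pw (mem \<sigma>) K k i j)"
      by (subst sum.swap) (simp add: sum_distrib_left mult.left_commute)
    also have "\<dots> = real n * (\<Sum>k<n. A k j)"
      using A_pw[OF j] by simp
    finally show ?thesis .
  qed
  have "b n \<le> (\<Sum>m\<in>mem \<sigma>. real n * (\<Sum>k<n. A k m) * be m)"
    unfolding b_def by (intro sum_mono mult_right_mono An be_nonneg)
  also have "\<dots> = real n * (\<Sum>k<n. b k)"
    unfolding b_def by (subst sum.swap) (simp add: sum_distrib_left sum_distrib_right mult.assoc)
  finally show ?thesis .
qed

lemma cost_lower:
  assumes "card (mem \<sigma>) \<le> n" "1 \<le> n"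
  shows "(\<Sum>t<n + 2. s t) \<ge> Vf n 0 + (1/2)^n / (32 * (real n + 1))"
proof -
  interpret seqs n a b s by (rule seqs)
  show ?thesis by (rule lower[OF b_nonneg b_le_a pig[OF assms]])
qed

end

definition good :: "nat \<Rightarrow> (nat, nat, nat) strat" where
  "good n = \<lparr>mem = {..n}, init = return_pmf 0,
     act = (\<lambda>s m. if s = 0 \<and> m = n then return_pmf 1 else return_pmf 0),
     upd = (\<lambda>m s. return_pmf (min (Suc m) n))\<rparr>"

lemma good_valid: "valid_strat (S1 n) Act1 (P1 n) (good n)"
  unfolding valid_strat_def good_def by (auto simp: enabled1)

lemma good_card: "finite (mem (good n)) \<and> card (mem (good n)) \<le> n + 1"
  by (simp add: good_def)

lemma good_cost: "(\<Sum>t<n + 2. survive (S1 n) (P1 n) 0 {1} (good n) t) = Vf n 0"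
proof -
  interpret ag1 n "good n" using good_valid good_card by unfold_locales auto
  interpret seqs n a b s by (rule seqs)
  have be: "be m = (if m = n then 1 else 0)" for m
    unfolding be_def by (simp add: good_def)
  have al: "al m = (if m = n then 0 else 1)" for m
    unfolding al_def by (simp add: good_def)
  have Az: "t \<le> n \<Longrightarrow> m \<noteq> t \<Longrightarrow> A t m = 0" for t m
  proof (induction t arbitrary: m)
    case 0 then show ?case unfolding A0 by (simp add: good_def)
  next
    case (Suc t)
    have "A (Suc t) m = (\<Sum>m0\<in>mem (good n). A t m0 * (al m0 / 2 * pmf (upd (good n) m0 0) m))"
      by (rule RA)
    also have "\<dots> = 0"
    proof (intro sum.neutral ballI)
      fix m0 assume "m0 \<in> mem (good n)"
      show "A t m0 * (al m0 / 2 * pmf (upd (good n) m0 0) m) = 0"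
      proof (cases "m0 = t")
        case True
        then have "pmf (upd (good n) m0 0) m = 0" using Suc.prems by (simp add: good_def)
        then show ?thesis by simp
      next
        case False then show ?thesis using Suc by simp
      qed
    qed
    finally show ?case .
  qed
  have bt: "b t = 0" if "t < n" for t
  proof -
    have "b t = (\<Sum>m\<in>{..n}. A t m * (if m = n then 1 else 0))"
      unfolding b_def be by (simp add: good_def)
    also have "\<dots> = A t n" by (simp add: if_distrib cong: if_cong)
    also have "\<dots> = 0" using Az[of t n] that by simp
    finally show ?thesis .
  qed
  have bn: "b n = a n"
  proof -
    have "b n = (\<Sum>m\<in>{..n}. A n m * (if m = n then 1 else 0))"
      unfolding b_def be by (simp add: good_def)
    also have "\<dots> = (\<Sum>m\<in>{..n}. A n m)"
      using Az[of n] by (intro sum.cong refl) auto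
    also have "\<dots> = a n" unfolding a_def by (simp add: good_def)
    finally show ?thesis .
  qed
  show ?thesis using good bt bn unfolding s_def by simp
qed

lemma E1:
  assumes vp: "valid_profile (S1 n) Act1 (P1 n) 2 \<pi>"
  shows "E_MHit (S1 n) (P1 n) 2 iota1 (T1 n) \<pi> = ennreal (\<Sum>t<n + 2. survive (S1 n) (P1 n) 0 {1} (\<pi> 0) t)"
proof -
  have v1: "valid_strat (S1 n) Act1 (P1 n) (\<pi> 1)" using vp unfolding valid_profile_def by auto
  have pm: "prob_MHit_gt (S1 n) (P1 n) 2 iota1 (T1 n) \<pi> t =
      (if t < n + 2 then survive (S1 n) (P1 n) 0 {1} (\<pi> 0) t else 0)" for t
    unfolding prob_MHit_gt_def using ag2_survive[OF v1, of t]
    by (simp add: numeral_2_eq_2 iota1_def T1_def)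
  have "E_MHit (S1 n) (P1 n) 2 iota1 (T1 n) \<pi> =
      (\<Sum>t. ennreal (if t < n + 2 then survive (S1 n) (P1 n) 0 {1} (\<pi> 0) t else 0))"
    unfolding E_MHit_def pm ..
  also have "\<dots> = (\<Sum>t<n + 2. ennreal (if t < n + 2 then survive (S1 n) (P1 n) 0 {1} (\<pi> 0) t else 0))"
    by (rule suminf_finite) auto
  also have "\<dots> = (\<Sum>t<n + 2. ennreal (survive (S1 n) (P1 n) 0 {1} (\<pi> 0) t))"
    by (intro sum.cong) auto
  also have "\<dots> = ennreal (\<Sum>t<n + 2. survive (S1 n) (P1 n) 0 {1} (\<pi> 0) t)"
    by (rule sum_ennreal) (rule survive_nonneg)
  finally show ?thesis .
qed

theorem part1:
  "\<forall>n::nat. n \<ge> 1 \<longrightarrow>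
            (\<exists>(S :: nat set) (Act :: nat set) P iota T (\<pi> :: nat \<Rightarrow> (nat, nat, nat) strat).
               is_mssp S Act P 2 iota T
             \<and> valid_profile S Act P 2 \<pi> \<and> mem_bounded (n + 1) 2 \<pi>
             \<and> E_MHit S P 2 iota T \<pi>
                 < (INF \<pi>' \<in> {\<pi>' :: nat \<Rightarrow> (nat, nat, nat) strat.
                                 valid_profile S Act P 2 \<pi>' \<and> mem_bounded n 2 \<pi>'}.
                      E_MHit S P 2 iota T \<pi>'))"
proof (intro allI impI)
  fix n :: nat assume n1: "n \<ge> 1"
  define \<pi> where "\<pi> = (\<lambda>i::nat. good n)"
  define \<delta> where "\<delta> = (1/2::real)^n / (32 * (real n + 1))"
  have \<delta>pos: "\<delta> > 0" unfolding \<delta>_def by simp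
  have vp: "valid_profile (S1 n) Act1 (P1 n) 2 \<pi>"
    unfolding valid_profile_def \<pi>_def using good_valid by auto
  have mb: "mem_bounded (n + 1) 2 \<pi>"
    unfolding mem_bounded_def \<pi>_def using good_card by auto
  have Vpos: "Vf n 0 \<ge> 0"
  proof -
    have "(5/8::real) * (1/2)^n \<le> 5/8 * 1" by (intro mult_left_mono) (auto simp: power_le_one)
    then show ?thesis unfolding Vf_def by simp
  qed
  have Epi: "E_MHit (S1 n) (P1 n) 2 iota1 (T1 n) \<pi> = ennreal (Vf n 0)"
    unfolding E1[OF vp] unfolding \<pi>_def good_cost ..
  have low: "ennreal (Vf n 0 + \<delta>) \<le> E_MHit (S1 n) (P1 n) 2 iota1 (T1 n) \<pi>'"
    if "valid_profile (S1 n) Act1 (P1 n) 2 \<pi>' \<and> mem_bounded n 2 \<pi>'" for \<pi>' :: "nat \<Rightarrow> (nat, nat, nat) strat"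
  proof -
    have v0: "valid_strat (S1 n) Act1 (P1 n) (\<pi>' 0)" and f0: "finite (mem (\<pi>' 0))"
      and c0: "card (mem (\<pi>' 0)) \<le> n"
      using that unfolding valid_profile_def mem_bounded_def by auto
    interpret ag1 n "\<pi>' 0" using v0 f0 by unfold_locales
    have "Vf n 0 + \<delta> \<le> (\<Sum>t<n + 2. s t)" using cost_lower[OF c0 n1] unfolding \<delta>_def .
    then show ?thesis unfolding E1[OF conjunct1[OF that]] s_def by (intro ennreal_leI)
  qed
  have "E_MHit (S1 n) (P1 n) 2 iota1 (T1 n) \<pi> < ennreal (Vf n 0 + \<delta>)"
    unfolding Epi using \<delta>pos Vpos by (subst ennreal_less_iff) auto
  also have "\<dots> \<le> (INF \<pi>' \<in> {\<pi>' :: nat \<Rightarrow> (nat, nat, nat) strat.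
                                 valid_profile (S1 n) Act1 (P1 n) 2 \<pi>' \<and> mem_bounded n 2 \<pi>'}.
                      E_MHit (S1 n) (P1 n) 2 iota1 (T1 n) \<pi>')"
    by (intro INF_greatest low) auto
  finally show "\<exists>(S :: nat set) (Act :: nat set) P iota T (\<pi> :: nat \<Rightarrow> (nat, nat, nat) strat).
               is_mssp S Act P 2 iota T
             \<and> valid_profile S Act P 2 \<pi> \<and> mem_bounded (n + 1) 2 \<pi>
             \<and> E_MHit S P 2 iota T \<pi>
                 < (INF \<pi>' \<in> {\<pi>' :: nat \<Rightarrow> (nat, nat, nat) strat.
                                 valid_profile S Act P 2 \<pi>' \<and> mem_bounded n 2 \<pi>'}.
                      E_MHit S P 2 iota T \<pi>')"
    using mssp1 vp mb by blast
qed

definition nu where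
  "nu S P \<iota> Tg \<sigma> t = map_pmf (map_option fst) (agent_dist S P \<iota> Tg \<sigma> t)"

definition xi :: "'s set \<Rightarrow> ('s \<Rightarrow> 'a \<Rightarrow> 's \<Rightarrow> real) \<Rightarrow> 's \<Rightarrow> 's set
     \<Rightarrow> ('s, 'a, 'm) strat \<Rightarrow> nat \<Rightarrow> ('s \<times> 'a) option pmf" where
  "xi S P \<iota> Tg \<sigma> t = bind_pmf (agent_dist S P \<iota> Tg \<sigma> t)
     (\<lambda>x. case x of None \<Rightarrow> return_pmf None | Some (s, m) \<Rightarrow> map_pmf (\<lambda>a. Some (s, a)) (act \<sigma> s m))"

definition Kn :: "'s set \<Rightarrow> ('s \<Rightarrow> 'a \<Rightarrow> 's \<Rightarrow> real) \<Rightarrow> 's set \<Rightarrow> 's \<Rightarrow> 'a \<Rightarrow> 's option pmf" where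
  "Kn S P Tg s a = map_pmf (\<lambda>s'. if s' \<in> Tg then None else Some s') (trans_pmf S P s a)"

definition Kc :: "'s set \<Rightarrow> ('s \<Rightarrow> 'a \<Rightarrow> 's \<Rightarrow> real) \<Rightarrow> 's set \<Rightarrow> ('s \<times> 'a) option \<Rightarrow> 's option pmf" where
  "Kc S P Tg z = (case z of None \<Rightarrow> return_pmf None | Some (s, a) \<Rightarrow> Kn S P Tg s a)"

lemma M1: "map_pmf (map_option fst) (xi S P \<iota> Tg \<sigma> t) = nu S P \<iota> Tg \<sigma> t"
  unfolding xi_def nu_def map_bind_pmf map_pmf_def[of "map_option fst" "agent_dist S P \<iota> Tg \<sigma> t"]
  by (intro bind_pmf_cong refl) (auto split: option.splits simp: map_pmf_comp)

lemma map_fst_const: "map_pmf (map_option fst) (map_pmf (\<lambda>m'. if c then None else Some (s', m')) q) = return_pmf (if c then None else Some s')"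
  by (cases c) (simp_all add: map_pmf_comp)

lemma M4: "nu S P \<iota> Tg \<sigma> (Suc t) = bind_pmf (xi S P \<iota> Tg \<sigma> t) (Kc S P Tg)"
  unfolding nu_def xi_def agent_dist_Suc2 map_bind_pmf bind_assoc_pmf
proof (intro bind_pmf_cong refl)
  fix x :: "('a \<times> 'c) option"
  show "map_pmf (map_option fst) (stepf S P Tg \<sigma> x) =
         bind_pmf (case x of None \<Rightarrow> return_pmf None | Some (s, m) \<Rightarrow> map_pmf (\<lambda>a. Some (s, a)) (act \<sigma> s m)) (Kc S P Tg)"
  proof (cases x)
    case None then show ?thesis by (simp add: bind_return_pmf Kc_def)
  next
    case (Some p)
    obtain s m where p: "p = (s, m)" by force
    have "map_pmf (map_option fst) (stepf S P Tg \<sigma> (Some (s, m))) =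
       bind_pmf (act \<sigma> s m) (\<lambda>a. bind_pmf (trans_pmf S P s a) (\<lambda>s'. return_pmf (if s' \<in> Tg then None else Some s')))"
      by (simp add: stepf_def map_bind_pmf map_fst_const)
    also have "\<dots> = bind_pmf (act \<sigma> s m) (\<lambda>a. Kn S P Tg s a)"
      unfolding Kn_def map_pmf_def ..
    finally have "map_pmf (map_option fst) (stepf S P Tg \<sigma> (Some (s, m))) =
       bind_pmf (act \<sigma> s m) (\<lambda>a. Kn S P Tg s a)" .
    then show ?thesis using Some p by (simp add: bind_map_pmf Kc_def)
  qed
qed

lemma pmf_nu_None: "pmf (nu S P \<iota> Tg \<sigma> t) None = pmf (agent_dist S P \<iota> Tg \<sigma> t) None"
  unfolding nu_def pmf_map
  by (subst measure_pmf_single[symmetric], rule arg_cong[where f="measure _"]) auto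

lemma survive_nu: "survive S P \<iota> Tg \<sigma> t = 1 - pmf (nu S P \<iota> Tg \<sigma> t) None"
  unfolding survive_def pmf_nu_None ..

definition simact :: "'s set \<Rightarrow> ('s \<Rightarrow> 'a \<Rightarrow> 's \<Rightarrow> real) \<Rightarrow> 's \<Rightarrow> 's set
     \<Rightarrow> ('s, 'a, 'm) strat \<Rightarrow> ('s \<Rightarrow> 'a) \<Rightarrow> nat \<Rightarrow> 's \<Rightarrow> 'a pmf" where
  "simact S P \<iota> Tg \<sigma> fb t s =
     (if set_pmf (xi S P \<iota> Tg \<sigma> t) \<inter> {z. map_option fst z = Some s} \<noteq> {}
      then map_pmf (\<lambda>z. snd (the z)) (cond_pmf (xi S P \<iota> Tg \<sigma> t) {z. map_option fst z = Some s})
      else return_pmf (fb s))"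

definition sim :: "'s set \<Rightarrow> ('s \<Rightarrow> 'a \<Rightarrow> 's \<Rightarrow> real) \<Rightarrow> 's \<Rightarrow> 's set
     \<Rightarrow> ('s, 'a, 'm) strat \<Rightarrow> nat \<Rightarrow> ('s \<Rightarrow> 'a) \<Rightarrow> ('s, 'a, nat) strat" where
  "sim S P \<iota> Tg \<sigma> N fb = \<lparr>mem = {..N}, init = return_pmf 0,
     act = (\<lambda>s m. if m < N then simact S P \<iota> Tg \<sigma> fb m s else return_pmf (fb s)),
     upd = (\<lambda>m s. return_pmf (min (Suc m) N))\<rparr>"

lemma disint:
  "xi S P \<iota> Tg \<sigma> t = bind_pmf (nu S P \<iota> Tg \<sigma> t)
     (\<lambda>y. case y of None \<Rightarrow> return_pmf None | Some s \<Rightarrow> map_pmf (\<lambda>a. Some (s, a)) (simact S P \<iota> Tg \<sigma> fb t s))"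
proof -
  let ?\<xi> = "xi S P \<iota> Tg \<sigma> t"
  let ?f = "map_option fst :: ('a \<times> 'b) option \<Rightarrow> 'a option"
  have nu: "nu S P \<iota> Tg \<sigma> t = map_pmf ?f ?\<xi>" using M1 by metis
  have canc: "bind_pmf (map_pmf ?f ?\<xi>) (\<lambda>y. cond_pmf ?\<xi> {z. ?f z = y}) = ?\<xi>"
  proof (rule bind_cond_pmf_cancel)
    fix y assume "y \<in> set_pmf (map_pmf ?f ?\<xi>)"
    then show "set_pmf ?\<xi> \<inter> {z. ?f z = y} \<noteq> {}" by auto
  next
    fix z assume "z \<in> set_pmf ?\<xi>"
    then show "set_pmf (map_pmf ?f ?\<xi>) \<inter> {y. ?f z = y} \<noteq> {}" by auto
  next
    fix y z assume "y \<in> set_pmf (map_pmf ?f ?\<xi>)" "z \<in> set_pmf ?\<xi>" "?f z = y"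
    then show "measure_pmf.prob ?\<xi> {z. ?f z = y} = measure_pmf.prob (map_pmf ?f ?\<xi>) {y. ?f z = y}"
      by (simp add: vimage_def)
  qed
  show ?thesis
    unfolding nu
  proof (subst canc[symmetric], intro bind_pmf_cong refl)
    fix y assume y: "y \<in> set_pmf (map_pmf ?f ?\<xi>)"
    show "cond_pmf ?\<xi> {z. ?f z = y} = (case y of None \<Rightarrow> return_pmf None
        | Some s \<Rightarrow> map_pmf (\<lambda>a. Some (s, a)) (simact S P \<iota> Tg \<sigma> fb t s))"
    proof (cases y)
      case None
      have ne: "set_pmf ?\<xi> \<inter> {z. ?f z = None} \<noteq> {}" using y None by auto
      have "set_pmf (cond_pmf ?\<xi> {z. ?f z = None}) \<subseteq> {None}"
        unfolding set_cond_pmf[OF ne] by auto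
      then have "cond_pmf ?\<xi> {z. ?f z = None} = return_pmf None" by (simp add: set_pmf_subset_singleton)
      then show ?thesis using None by simp
    next
      case (Some s)
      have ne: "set_pmf ?\<xi> \<inter> {z. ?f z = Some s} \<noteq> {}"
      proof -
        from y have "y \<in> ?f ` set_pmf ?\<xi>" by simp
        then obtain z where z: "z \<in> set_pmf ?\<xi>" "y = ?f z" by blast
        then have "z \<in> set_pmf ?\<xi> \<inter> {z. ?f z = Some s}" using Some by simp
        then show ?thesis by blast
      qed
      have "map_pmf (\<lambda>a. Some (s, a)) (simact S P \<iota> Tg \<sigma> fb t s)
          = map_pmf (\<lambda>z. Some (s, snd (the z))) (cond_pmf ?\<xi> {z. ?f z = Some s})"
        unfolding simact_def using ne by (simp add: map_pmf_comp)
      also have "\<dots> = map_pmf (\<lambda>z. z) (cond_pmf ?\<xi> {z. ?f z = Some s})"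
      proof (rule map_pmf_cong[OF refl])
        fix z assume "z \<in> set_pmf (cond_pmf ?\<xi> {z. ?f z = Some s})"
        then have "z \<in> set_pmf ?\<xi> \<inter> {z. ?f z = Some s}" unfolding set_cond_pmf[OF ne] .
        then show "Some (s, snd (the z)) = z" by auto
      qed
      finally show ?thesis using Some by simp
    qed
  qed
qed

lemma sim_dist:
  assumes "t \<le> N"
  shows "agent_dist S P \<iota> Tg (sim S P \<iota> Tg \<sigma> N fb) t
     = map_pmf (map_option (\<lambda>s. (s, t))) (nu S P \<iota> Tg \<sigma> t)"
  using assms
proof (induction t)
  case 0
  show ?case
    by (cases "\<iota> \<in> Tg") (simp_all add: sim_def nu_def map_pmf_comp)
next
  case (Suc t)
  then have tN: "t < N" by simp
  let ?H = "\<lambda>y. case y of None \<Rightarrow> return_pmf None | Some s \<Rightarrow> bind_pmf (simact S P \<iota> Tg \<sigma> fb t s) (Kn S P Tg s)"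
  have st: "stepf S P Tg (sim S P \<iota> Tg \<sigma> N fb) (map_option (\<lambda>s. (s, t)) y)
      = map_pmf (map_option (\<lambda>s. (s, Suc t))) (?H y)" for y
  proof (cases y)
    case None then show ?thesis by simp
  next
    case (Some s)
    have ac: "act (sim S P \<iota> Tg \<sigma> N fb) s t = simact S P \<iota> Tg \<sigma> fb t s"
      using tN by (simp add: sim_def)
    have up: "\<And>s'. upd (sim S P \<iota> Tg \<sigma> N fb) t s' = return_pmf (Suc t)"
      using tN by (simp add: sim_def min_def)
    have "stepf S P Tg (sim S P \<iota> Tg \<sigma> N fb) (Some (s, t)) =
       bind_pmf (simact S P \<iota> Tg \<sigma> fb t s) (\<lambda>a. bind_pmf (trans_pmf S P s a)
          (\<lambda>s'. return_pmf (if s' \<in> Tg then None else Some (s', Suc t))))"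
      by (simp only: stepf_def ac up option.case prod.case map_return_pmf)
    also have "\<dots> = bind_pmf (simact S P \<iota> Tg \<sigma> fb t s) (\<lambda>a.
          map_pmf (\<lambda>s'. if s' \<in> Tg then None else Some (s', Suc t)) (trans_pmf S P s a))"
      by (simp only: map_pmf_def)
    also have "\<dots> = map_pmf (map_option (\<lambda>s. (s, Suc t))) (bind_pmf (simact S P \<iota> Tg \<sigma> fb t s) (Kn S P Tg s))"
      unfolding Kn_def map_bind_pmf map_pmf_comp
      by (intro bind_pmf_cong refl map_pmf_cong) auto
    finally show ?thesis using Some by simp
  qed
  have "agent_dist S P \<iota> Tg (sim S P \<iota> Tg \<sigma> N fb) (Suc t)
      = bind_pmf (nu S P \<iota> Tg \<sigma> t) (\<lambda>y. map_pmf (map_option (\<lambda>s. (s, Suc t))) (?H y))"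
    unfolding agent_dist_Suc2 Suc.IH[OF less_imp_le[OF tN]] bind_map_pmf st ..
  also have "\<dots> = map_pmf (map_option (\<lambda>s. (s, Suc t))) (bind_pmf (nu S P \<iota> Tg \<sigma> t) ?H)"
    by (simp add: map_bind_pmf)
  also have "bind_pmf (nu S P \<iota> Tg \<sigma> t) ?H = nu S P \<iota> Tg \<sigma> (Suc t)"
  proof -
    have "nu S P \<iota> Tg \<sigma> (Suc t) = bind_pmf (xi S P \<iota> Tg \<sigma> t) (Kc S P Tg)" by (rule M4)
    also have "\<dots> = bind_pmf (nu S P \<iota> Tg \<sigma> t) (\<lambda>y. bind_pmf (case y of None \<Rightarrow> return_pmf None
        | Some s \<Rightarrow> map_pmf (\<lambda>a. Some (s, a)) (simact S P \<iota> Tg \<sigma> fb t s)) (Kc S P Tg))"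
      by (subst disint[where fb=fb]) (simp add: bind_assoc_pmf)
    also have "\<dots> = bind_pmf (nu S P \<iota> Tg \<sigma> t) ?H"
      by (intro bind_pmf_cong refl) (auto split: option.splits simp: bind_return_pmf bind_map_pmf Kc_def)
    finally show ?thesis ..
  qed
  finally show ?case .
qed

lemma sim_survive:
  assumes "t \<le> N"
  shows "survive S P \<iota> Tg (sim S P \<iota> Tg \<sigma> N fb) t = survive S P \<iota> Tg \<sigma> t"
proof -
  have "nu S P \<iota> Tg (sim S P \<iota> Tg \<sigma> N fb) t = nu S P \<iota> Tg \<sigma> t"
  proof -
    have i: "map_option (\<lambda>x. x) = (\<lambda>x. x)" by (rule ext) (simp add: option.map_ident)
    show ?thesis unfolding nu_def[of _ _ _ _ "sim S P \<iota> Tg \<sigma> N fb"] sim_dist[OF assms]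
      by (simp add: map_pmf_comp option.map_comp comp_def i)
  qed
  then show ?thesis unfolding survive_nu by simp
qed

locale agt =
  fixes S :: "'s set" and Act :: "'a set" and P :: "'s \<Rightarrow> 'a \<Rightarrow> 's \<Rightarrow> real" and T :: "'s set"
  assumes mdp: "is_mdp S Act P" and TS: "T \<subseteq> S"
begin

lemma finS: "finite S" and finA: "finite Act" using mdp unfolding is_mdp_def by auto

lemma Pnn: "s \<in> S \<Longrightarrow> a \<in> Act \<Longrightarrow> s' \<in> S \<Longrightarrow> 0 \<le> P s a s'"
  using mdp unfolding is_mdp_def by auto

lemma Ple1: "s \<in> S \<Longrightarrow> a \<in> Act \<Longrightarrow> s' \<in> S \<Longrightarrow> P s a s' \<le> 1"
  using mdp unfolding is_mdp_def by auto

lemma en_Act: "a \<in> enabled S Act P s \<Longrightarrow> a \<in> Act" unfolding enabled_def by auto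
lemma en_sum: "a \<in> enabled S Act P s \<Longrightarrow> (\<Sum>s'\<in>S. P s a s') = 1" unfolding enabled_def by auto

definition PV where "PV = {P s a s' | s a s'. s \<in> S \<and> a \<in> Act \<and> s' \<in> S \<and> 0 < P s a s'}"
definition pmin where "pmin = (if PV = {} then 1 else Min PV)"

lemma finPV: "finite PV"
proof -
  have "PV \<subseteq> (\<lambda>(s, a, s'). P s a s') ` (S \<times> Act \<times> S)"
  proof
    fix x assume "x \<in> PV"
    then obtain s a s' where "x = P s a s'" "s \<in> S" "a \<in> Act" "s' \<in> S" unfolding PV_def by auto
    then show "x \<in> (\<lambda>(s, a, s'). P s a s') ` (S \<times> Act \<times> S)"
      by (intro image_eqI[of _ _ "(s, a, s')"]) auto
  qed
  moreover have "finite ((\<lambda>(s, a, s'). P s a s') ` (S \<times> Act \<times> S))" using finS finA by simp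
  ultimately show ?thesis by (rule finite_subset)
qed

lemma pmin_pos: "0 < pmin"
  unfolding pmin_def using finPV by (auto simp: PV_def)

lemma pmin_le1: "pmin \<le> 1"
proof (cases "PV = {}")
  case False
  then obtain x where "x \<in> PV" by auto
  then have "Min PV \<le> x" "x \<le> 1" using finPV Ple1 unfolding PV_def by auto
  then show ?thesis using False unfolding pmin_def by auto
qed (simp add: pmin_def)

lemma pmin_le: "s \<in> S \<Longrightarrow> a \<in> Act \<Longrightarrow> s' \<in> S \<Longrightarrow> P s a s' \<noteq> 0 \<Longrightarrow> pmin \<le> P s a s'"
proof -
  assume *: "s \<in> S" "a \<in> Act" "s' \<in> S" "P s a s' \<noteq> 0"
  then have "P s a s' \<in> PV" using Pnn[of s a s'] unfolding PV_def by force
  then show ?thesis unfolding pmin_def using finPV by auto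
qed

definition safe where
  "safe X s a \<longleftrightarrow> a \<in> enabled S Act P s \<and> (\<forall>s'\<in>S. P s a s' \<noteq> 0 \<longrightarrow> s' \<in> X \<union> T)"

inductive reachT for X where
  r1: "s \<in> X \<Longrightarrow> safe X s a \<Longrightarrow> s' \<in> S \<Longrightarrow> P s a s' \<noteq> 0 \<Longrightarrow> s' \<in> T \<Longrightarrow> reachT X s"
| r2: "s \<in> X \<Longrightarrow> safe X s a \<Longrightarrow> s' \<in> S \<Longrightarrow> P s a s' \<noteq> 0 \<Longrightarrow> reachT X s' \<Longrightarrow> reachT X s"

lemma reachT_in: "reachT X s \<Longrightarrow> s \<in> X"
  by (induction rule: reachT.induct) auto

fun Wk where
  "Wk 0 = S - T"
| "Wk (Suc k) = {s. reachT (Wk k) s}"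

lemma Wk_Suc_sub: "Wk (Suc k) \<subseteq> Wk k"
  using reachT_in by auto

lemma Wk_anti: "j \<le> k \<Longrightarrow> Wk k \<subseteq> Wk j"
proof (induction k rule: dec_induct)
  case base then show ?case by simp
next
  case (step k) then show ?case using Wk_Suc_sub[of k] by auto
qed

lemma Wk_sub: "Wk k \<subseteq> S - T"
  using Wk_anti[of 0 k] by simp

lemma Wk_stable: "Wk (Suc k) = Wk k \<Longrightarrow> Wk (Suc (Suc k)) = Wk (Suc k)"
  by simp

lemma Wk_stable_all:
  assumes e: "Wk (Suc k) = Wk k" and kj: "k \<le> j" shows "Wk j = Wk k"
  using kj
proof (induction j rule: dec_induct)
  case base then show ?case by simp
next
  case (step j)
  have "Wk (Suc j) = {s. reachT (Wk j) s}" by simp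
  also have "\<dots> = {s. reachT (Wk k) s}" using step.IH by simp
  also have "\<dots> = Wk (Suc k)" by simp
  also have "\<dots> = Wk k" by (rule e)
  finally show ?case .
qed

lemma Wk_card: "(\<exists>j\<le>k. Wk (Suc j) = Wk j) \<or> card (Wk k) + k \<le> card S"
proof (induction k)
  case 0
  have "card (Wk 0) \<le> card S" using finS by (intro card_mono) auto
  then show ?case by simp
next
  case (Suc k)
  show ?case
  proof (cases "\<exists>j\<le>k. Wk (Suc j) = Wk j")
    case True then show ?thesis by (meson le_SucI)
  next
    case False
    with Suc.IH have c: "card (Wk k) + k \<le> card S" by blast
    have "Wk (Suc k) \<noteq> Wk k" using False by auto
    then have "Wk (Suc k) \<subset> Wk k" using Wk_Suc_sub by auto
    moreover have "finite (Wk k)" using Wk_sub finS by (meson finite_Diff finite_subset)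
    ultimately have "card (Wk (Suc k)) < card (Wk k)" by (rule psubset_card_mono[rotated])
    then show ?thesis using c by simp
  qed
qed

definition W where "W = Wk (card S)"

lemma W_fix: "Wk (Suc (card S)) = W"
proof (cases "\<exists>j\<le>card S. Wk (Suc j) = Wk j")
  case True
  then obtain j where j: "j \<le> card S" "Wk (Suc j) = Wk j" by auto
  then show ?thesis unfolding W_def using Wk_stable_all[OF j(2)] j(1) by (metis le_SucI)
next
  case False
  then have "card (Wk (card S)) + card S \<le> card S" using Wk_card[of "card S"] by blast
  then have "card (Wk (card S)) = 0" by simp
  moreover have "finite (Wk (card S))" using Wk_sub finS by (meson finite_Diff finite_subset)
  ultimately have "Wk (card S) = {}" by simp
  then show ?thesis unfolding W_def using Wk_Suc_sub[of "card S"] by auto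
qed

lemma W_reach: "s \<in> W \<Longrightarrow> reachT W s"
  using W_fix by (metis Wk.simps(2) W_def mem_Collect_eq)

lemma W_sub: "W \<subseteq> S - T" unfolding W_def by (rule Wk_sub)

lemma W_sub_Wk: "k \<le> card S \<Longrightarrow> W \<subseteq> Wk k"
  unfolding W_def by (rule Wk_anti)

definition lay where "lay s = (LEAST k. s \<notin> Wk (Suc k))"
definition phi where "phi s = (if s \<in> S - T - W then pmin ^ lay s else 0)"

lemma lay_props:
  assumes s: "s \<in> S - T - W"
  shows "s \<notin> Wk (Suc (lay s))" "s \<in> Wk (lay s)" "lay s < card S"
proof -
  have "card S \<noteq> 0" using s finS by auto
  then obtain c where c: "card S = Suc c" by (cases "card S") auto
  have ex: "s \<notin> Wk (Suc c)" using s c unfolding W_def by simp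
  show 1: "s \<notin> Wk (Suc (lay s))" unfolding lay_def by (rule LeastI[of _ c]) (rule ex)
  have "lay s \<le> c" unfolding lay_def by (rule Least_le) (rule ex)
  then show "lay s < card S" using c by simp
  show "s \<in> Wk (lay s)"
  proof (cases "lay s")
    case 0 then show ?thesis using s by simp
  next
    case (Suc j)
    then have "j < lay s" by simp
    then have "\<not> (s \<notin> Wk (Suc j))" unfolding lay_def by (rule not_less_Least)
    then show ?thesis using Suc by simp
  qed
qed

lemma lay_eq:
  assumes "s \<in> Wk k" "s \<notin> Wk (Suc k)" shows "lay s = k"
  unfolding lay_def
proof (rule Least_equality)
  show "s \<notin> Wk (Suc k)" by (rule assms(2))
  fix j assume j: "s \<notin> Wk (Suc j)"
  show "k \<le> j"
  proof (rule ccontr)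
    assume "\<not> k \<le> j"
    then have "Suc j \<le> k" by simp
    then have "Wk k \<subseteq> Wk (Suc j)" by (rule Wk_anti)
    then show False using assms(1) j by auto
  qed
qed

lemma phi_nonneg: "0 \<le> phi s" unfolding phi_def using pmin_pos by simp
lemma phi_le1: "phi s \<le> 1" unfolding phi_def using pmin_pos pmin_le1 by (simp add: power_le_one)
lemma phi_pos: "s \<in> S - T - W \<Longrightarrow> 0 < phi s" unfolding phi_def using pmin_pos by simp

lemma phi_step:
  assumes s: "s \<in> S - T - W" and a: "a \<in> enabled S Act P s"
  shows "phi s \<le> (\<Sum>s'\<in>S. P s a s' * phi s')"
proof -
  define k where "k = lay s"
  note lp = lay_props[OF s, folded k_def]
  have aA: "a \<in> Act" using a by (rule en_Act)
  have sS: "s \<in> S" using s by auto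
  have nn: "\<And>s'. s' \<in> S \<Longrightarrow> 0 \<le> P s a s' * phi s'"
    using Pnn[OF sS aA] phi_nonneg by (simp add: mult_nonneg_nonneg)
  have phis: "phi s = pmin ^ k" using s unfolding phi_def k_def by simp
  show ?thesis
  proof (cases "safe (Wk k) s a")
    case True
    have sup: "s' \<in> Wk k - Wk (Suc k)" if s': "s' \<in> S" "P s a s' \<noteq> 0" for s'
    proof -
      have "s' \<in> Wk k \<union> T" using True s' unfolding safe_def by auto
      moreover have "s' \<notin> T"
      proof
        assume "s' \<in> T"
        then have "reachT (Wk k) s" using reachT.r1[OF lp(2) True s'] by simp
        then show False using lp(1) by simp
      qed
      moreover have "s' \<notin> Wk (Suc k)"
      proof
        assume "s' \<in> Wk (Suc k)"
        then have "reachT (Wk k) s" using reachT.r2[OF lp(2) True s'] by simp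
        then show False using lp(1) by simp
      qed
      ultimately show ?thesis by auto
    qed
    have "(\<Sum>s'\<in>S. P s a s' * phi s') = (\<Sum>s'\<in>S. P s a s' * pmin ^ k)"
    proof (intro sum.cong refl)
      fix s' assume s': "s' \<in> S"
      show "P s a s' * phi s' = P s a s' * pmin ^ k"
      proof (cases "P s a s' = 0")
        case False
        then have "s' \<in> Wk k - Wk (Suc k)" using sup s' by auto
        moreover have "W \<subseteq> Wk (Suc k)" using lp(3) by (intro W_sub_Wk) simp
        ultimately have "s' \<in> S - T - W" "lay s' = k" using Wk_sub lay_eq by auto
        then show ?thesis unfolding phi_def by simp
      qed simp
    qed
    also have "\<dots> = pmin ^ k" using en_sum[OF a] by (simp add: sum_distrib_right[symmetric])
    finally show ?thesis using phis by simp
  next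
    case False
    then obtain s' where s': "s' \<in> S" "P s a s' \<noteq> 0" "s' \<notin> Wk k \<union> T"
      using a unfolding safe_def by auto
    have k0: "k \<noteq> 0"
    proof
      assume "k = 0"
      then show False using s' by simp
    qed
    then obtain j where j: "k = Suc j" by (cases k) auto
    have s'W: "s' \<notin> W" using s' W_sub_Wk[of k] lp(3) by auto
    have s'in: "s' \<in> S - T - W" using s' s'W by auto
    have "lay s' \<le> j" unfolding lay_def using s' j by (intro Least_le) auto
    then have "pmin ^ j \<le> pmin ^ lay s'" using pmin_pos pmin_le1 by (intro power_decreasing) auto
    then have ph: "pmin ^ j \<le> phi s'" using s'in unfolding phi_def by simp
    have "phi s = pmin * pmin ^ j" using phis j by simp
    also have "\<dots> \<le> P s a s' * phi s'"
      using pmin_le[OF sS aA s'(1) s'(2)] ph pmin_pos by (intro mult_mono) auto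
    also have "\<dots> \<le> (\<Sum>s'\<in>S. P s a s' * phi s')"
      using finS s'(1) nn by (intro member_le_sum) auto
    finally show ?thesis .
  qed
qed

fun Lev where
  "Lev 0 = T"
| "Lev (Suc k) = Lev k \<union> {s \<in> W. \<exists>a. safe W s a \<and> (\<exists>s'\<in>Lev k. s' \<in> S \<and> P s a s' \<noteq> 0)}"

lemma Lev_sub: "Lev k \<subseteq> W \<union> T"
  by (induction k) auto

lemma W_Lev: "reachT W s \<Longrightarrow> \<exists>k. s \<in> Lev k"
proof (induction rule: reachT.induct)
  case (r1 s a s')
  then have "s \<in> Lev (Suc 0)" by auto
  then show ?case by blast
next
  case (r2 s a s')
  then obtain k where "s' \<in> Lev k" by auto
  then have "s \<in> Lev (Suc k)" using r2 by auto
  then show ?case by blast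
qed

definition dist where "dist s = (LEAST k. s \<in> Lev k)"

lemma dist_T: "s \<in> T \<Longrightarrow> dist s = 0"
  unfolding dist_def by (rule Least_equality) auto

lemma dist_W:
  assumes s: "s \<in> W"
  shows "\<exists>a. safe W s a \<and> (\<exists>s'\<in>S. P s a s' \<noteq> 0 \<and> s' \<in> W \<union> T \<and> dist s' < dist s)"
proof -
  have ex: "\<exists>k. s \<in> Lev k" using W_Lev[OF W_reach[OF s]] .
  have inL: "s \<in> Lev (dist s)" unfolding dist_def using ex by (rule LeastI_ex)
  have "s \<notin> T" using s W_sub by auto
  then have "dist s \<noteq> 0"
  proof -
    assume nT: "s \<notin> T"
    show "dist s \<noteq> 0"
    proof
      assume "dist s = 0" then show False using inL nT by simp
    qed
  qed
  then obtain j where j: "dist s = Suc j" by (cases "dist s") auto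
  have "\<not> s \<in> Lev j" unfolding dist_def by (rule not_less_Least) (use j in \<open>simp add: dist_def\<close>)
  then obtain a s' where a: "safe W s a" "s' \<in> Lev j" "s' \<in> S" "P s a s' \<noteq> 0"
    using inL j by auto
  have "dist s' \<le> j" unfolding dist_def using a(2) by (rule Least_le)
  then have "dist s' < dist s" using j by simp
  moreover have "s' \<in> W \<union> T" using a(2) Lev_sub by auto
  ultimately show ?thesis using a by blast
qed

definition gact where
  "gact s = (SOME a. safe W s a \<and> (\<exists>s'\<in>S. P s a s' \<noteq> 0 \<and> s' \<in> W \<union> T \<and> dist s' < dist s))"

definition fbk where
  "fbk s = (if s \<in> W then gact s else (SOME a. a \<in> enabled S Act P s))"

lemma fbk_W:
  assumes "s \<in> W"
  shows "safe W s (fbk s) \<and> (\<exists>s'\<in>S. P s (fbk s) s' \<noteq> 0 \<and> s' \<in> W \<union> T \<and> dist s' < dist s)"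
  using someI_ex[OF dist_W[OF assms]] assms unfolding fbk_def gact_def by simp

lemma fbk_en: "s \<in> S \<Longrightarrow> fbk s \<in> enabled S Act P s"
proof (cases "s \<in> W")
  case True then show ?thesis using fbk_W unfolding safe_def by blast
next
  case False
  assume "s \<in> S"
  then have "enabled S Act P s \<noteq> {}" using mdp unfolding is_mdp_def by auto
  then show ?thesis using False unfolding fbk_def by (simp add: some_in_eq)
qed

definition LL where "LL = (if W = {} then 0 else Max (dist ` W))"

lemma finW: "finite W" using W_sub finS by (meson finite_Diff finite_subset)

lemma dist_le_LL: "s \<in> W \<Longrightarrow> dist s \<le> LL"
  unfolding LL_def using finW by auto

definition G where "G = real LL / pmin ^ LL"
definition ee where "ee k = pmin ^ k * G - (\<Sum>i<k. pmin ^ i)"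

lemma G_nonneg: "0 \<le> G" unfolding G_def using pmin_pos by simp

lemma ee_Suc: "ee (Suc k) = pmin * ee k - 1"
proof -
  have e: "(\<Sum>i<Suc k. pmin ^ i) = 1 + pmin * (\<Sum>i<k. pmin ^ i)"
    by (subst sum.lessThan_Suc_shift) (simp add: sum_distrib_left)
  show ?thesis unfolding ee_def e by (simp add: algebra_simps)
qed

lemma ee_nonneg: "k \<le> LL \<Longrightarrow> 0 \<le> ee k"
proof -
  assume k: "k \<le> LL"
  have "(\<Sum>i<k. pmin ^ i) \<le> (\<Sum>i<k. 1)"
    using pmin_pos pmin_le1 by (intro sum_mono) (auto simp: power_le_one)
  then have s: "(\<Sum>i<k. pmin ^ i) \<le> real k" by simp
  have "pmin ^ LL \<le> pmin ^ k" using k pmin_pos pmin_le1 by (intro power_decreasing) auto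
  then have "pmin ^ LL * G \<le> pmin ^ k * G" using G_nonneg by (rule mult_right_mono)
  moreover have "pmin ^ LL * G = real LL" unfolding G_def using pmin_pos by simp
  ultimately show ?thesis unfolding ee_def using s k by linarith
qed

lemma ee_le_G: "ee k \<le> G"
proof -
  have "pmin ^ k * G \<le> 1 * G" using pmin_pos pmin_le1 G_nonneg
    by (intro mult_right_mono) (auto simp: power_le_one)
  moreover have "0 \<le> (\<Sum>i<k. pmin ^ i)" using pmin_pos by (intro sum_nonneg) auto
  ultimately show ?thesis unfolding ee_def by simp
qed

lemma ee_anti: "j \<le> k \<Longrightarrow> k \<le> LL \<Longrightarrow> ee k \<le> ee j"
proof (induction k rule: dec_induct)
  case base then show ?case by simp
next
  case (step k)
  have "0 \<le> ee k" using step by (intro ee_nonneg) simp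
  then have "pmin * ee k \<le> ee k" using pmin_le1 pmin_pos by (intro mult_left_le_one_le) auto
  then have "ee (Suc k) \<le> ee k" unfolding ee_Suc by simp
  then show ?case using step by simp
qed

definition gfun where "gfun s = (if s \<in> W then G - ee (dist s) else 0)"

lemma gfun_nonneg: "0 \<le> gfun s" unfolding gfun_def using ee_le_G by simp
lemma gfun_le_G: "gfun s \<le> G"
  unfolding gfun_def using ee_nonneg dist_le_LL G_nonneg by auto

lemma drift:
  assumes s: "s \<in> W"
  shows "1 + (\<Sum>s'\<in>S. P s (fbk s) s' * (if s' \<in> T then 0 else gfun s')) \<le> gfun s"
proof -
  define a where "a = fbk s"
  define h where "h s' = (if s' \<in> T then 0 else gfun s')" for s'
  define k where "k = dist s"
  obtain s0 where s0: "s0 \<in> S" "P s a s0 \<noteq> 0" "s0 \<in> W \<union> T" "dist s0 < k"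
    using fbk_W[OF s] unfolding a_def k_def by auto
  have sa: "safe W s a" using fbk_W[OF s] unfolding a_def by auto
  have sS: "s \<in> S" using s W_sub by auto
  have aE: "a \<in> enabled S Act P s" using sa unfolding safe_def by auto
  have aA: "a \<in> Act" using aE by (rule en_Act)
  have kL: "k \<le> LL" unfolding k_def using dist_le_LL[OF s] .
  have k1: "k \<ge> 1" using s0(4) by simp
  have hnn: "0 \<le> h s'" for s' unfolding h_def using gfun_nonneg by simp
  have hG: "h s' \<le> G" for s' unfolding h_def using gfun_le_G G_nonneg by simp
  have h0: "h s0 \<le> G - ee (k - 1)"
  proof (cases "s0 \<in> T")
    case True then show ?thesis unfolding h_def using ee_le_G by simp
  next
    case False
    then have "s0 \<in> W" using s0 by auto
    moreover have "ee (k - 1) \<le> ee (dist s0)" using s0(4) kL by (intro ee_anti) auto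
    ultimately show ?thesis unfolding h_def gfun_def using False by simp
  qed
  have P0: "pmin \<le> P s a s0" using pmin_le[OF sS aA s0(1) s0(2)] .
  have Pnn': "\<And>s'. s' \<in> S \<Longrightarrow> 0 \<le> P s a s'" using Pnn[OF sS aA] .
  have sum1: "(\<Sum>s'\<in>S. P s a s') = 1" using en_sum[OF aE] .
  have "(\<Sum>s'\<in>S. P s a s' * h s') = P s a s0 * h s0 + (\<Sum>s'\<in>S - {s0}. P s a s' * h s')"
    using finS s0(1) by (simp add: sum.remove)
  also have "(\<Sum>s'\<in>S - {s0}. P s a s' * h s') \<le> (\<Sum>s'\<in>S - {s0}. P s a s' * G)"
    using Pnn' hG by (intro sum_mono mult_left_mono) auto
  also have "(\<Sum>s'\<in>S - {s0}. P s a s' * G) = (1 - P s a s0) * G"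
    using sum1 finS s0(1) by (simp add: sum_distrib_right[symmetric] sum_diff1)
  finally have "(\<Sum>s'\<in>S. P s a s' * h s') \<le> G - P s a s0 * (G - h s0)"
    by (simp add: algebra_simps)
  also have "\<dots> \<le> G - pmin * (G - h s0)"
    using P0 hG[of s0] by (intro diff_left_mono mult_right_mono) auto
  also have "\<dots> \<le> G - pmin * ee (k - 1)"
    using h0 pmin_pos by (intro diff_left_mono mult_left_mono) auto
  finally have "1 + (\<Sum>s'\<in>S. P s a s' * h s') \<le> G - (pmin * ee (k - 1) - 1)" by simp
  also have "pmin * ee (k - 1) - 1 = ee k" using k1 ee_Suc[of "k - 1"] by simp
  also have "G - ee k = gfun s" unfolding gfun_def k_def using s by simp
  finally show ?thesis unfolding a_def h_def .
qed

end

definition hopt :: "('s \<Rightarrow> real) \<Rightarrow> 's option \<Rightarrow> ennreal" where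
  "hopt h y = (case y of None \<Rightarrow> 0 | Some s \<Rightarrow> ennreal (h s))"

locale agt2 = agt S Act P T for S :: "'s set" and Act :: "'a set" and P T +
  fixes \<iota> :: 's
  assumes iS: "\<iota> \<in> S" and iT: "\<iota> \<notin> T"
begin

lemma alive_notT:
  assumes v: "valid_strat S Act P \<sigma>"
  shows "Some (s, m) \<in> set_pmf (agent_dist S P \<iota> T \<sigma> t) \<Longrightarrow> s \<notin> T"
proof (induction t arbitrary: s m)
  case 0 then show ?case using iT by (auto split: if_splits)
next
  case (Suc t)
  then obtain x where x: "x \<in> set_pmf (agent_dist S P \<iota> T \<sigma> t)"
    and y: "Some (s, m) \<in> set_pmf (stepf S P T \<sigma> x)"
    unfolding agent_dist_Suc2 by auto
  show ?case
  proof (cases x)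
    case None then show ?thesis using y by simp
  next
    case (Some p)
    obtain s0 m0 where p: "p = (s0, m0)" by force
    have "s0 \<in> S" "m0 \<in> mem \<sigma>" using agent_dist_support[OF mdp v iS] x Some p by auto
    from set_stepf_Some[OF mdp v this] y Some p obtain s' m' where
      "Some (s, m) = (if s' \<in> T then None else Some (s', m'))" by blast
    then show ?thesis by (auto split: if_splits)
  qed
qed

lemma xi_supp:
  assumes v: "valid_strat S Act P \<sigma>" and z: "Some (s, a) \<in> set_pmf (xi S P \<iota> T \<sigma> t)"
  shows "s \<in> S \<and> s \<notin> T \<and> a \<in> enabled S Act P s"
proof -
  from z obtain x where x: "x \<in> set_pmf (agent_dist S P \<iota> T \<sigma> t)"
    and zz: "Some (s, a) \<in> set_pmf (case x of None \<Rightarrow> return_pmf None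
        | Some (s, m) \<Rightarrow> map_pmf (\<lambda>a. Some (s, a)) (act \<sigma> s m))"
    unfolding xi_def by auto
  obtain m where xm: "x = Some (s, m)" and a: "a \<in> set_pmf (act \<sigma> s m)"
    using zz by (cases x) auto
  have "s \<in> S" "m \<in> mem \<sigma>" using agent_dist_support[OF mdp v iS] x xm by auto
  moreover have "s \<notin> T" using alive_notT[OF v] x xm by auto
  ultimately show ?thesis using v a unfolding valid_strat_def by blast
qed

lemma nn_Kn:
  assumes s: "s \<in> S" and a: "a \<in> enabled S Act P s" and h: "\<And>s'. 0 \<le> h s'"
  shows "(\<integral>\<^sup>+y. hopt h y \<partial>Kn S P T s a) = ennreal (\<Sum>s'\<in>S. P s a s' * (if s' \<in> T then 0 else h s'))"
proof -
  have "(\<integral>\<^sup>+y. hopt h y \<partial>Kn S P T s a) =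
      (\<integral>\<^sup>+s'. hopt h (if s' \<in> T then None else Some s') \<partial>trans_pmf S P s a)"
    unfolding Kn_def by simp
  also have "\<dots> = (\<Sum>s'\<in>S. hopt h (if s' \<in> T then None else Some s') * ennreal (pmf (trans_pmf S P s a) s'))"
    using set_trans_pmf[OF mdp s a] finS by (intro nn_integral_measure_pmf_support) auto
  also have "\<dots> = (\<Sum>s'\<in>S. ennreal (P s a s' * (if s' \<in> T then 0 else h s')))"
  proof (intro sum.cong refl)
    fix s' assume s': "s' \<in> S"
    have "0 \<le> P s a s'" using Pnn[OF s en_Act[OF a] s'] .
    then show "hopt h (if s' \<in> T then None else Some s') * ennreal (pmf (trans_pmf S P s a) s') =
        ennreal (P s a s' * (if s' \<in> T then 0 else h s'))"
      using s' h[of s'] by (simp add: trans_pmf_pmf[OF mdp s a] hopt_def ennreal_mult' mult.commute)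
  qed
  also have "\<dots> = ennreal (\<Sum>s'\<in>S. P s a s' * (if s' \<in> T then 0 else h s'))"
    using Pnn[OF s en_Act[OF a]] h by (intro sum_ennreal) auto
  finally show ?thesis .
qed

definition Phi where "Phi \<sigma> t = (\<integral>\<^sup>+y. hopt phi y \<partial>nu S P \<iota> T \<sigma> t)"

lemma Phi_Suc:
  assumes v: "valid_strat S Act P \<sigma>"
  shows "Phi \<sigma> t \<le> Phi \<sigma> (Suc t)"
proof -
  have "Phi \<sigma> t = (\<integral>\<^sup>+z. hopt phi (map_option fst z) \<partial>xi S P \<iota> T \<sigma> t)"
    unfolding Phi_def M1[symmetric] by simp
  also have "\<dots> \<le> (\<integral>\<^sup>+z. (\<integral>\<^sup>+y. hopt phi y \<partial>Kc S P T z) \<partial>xi S P \<iota> T \<sigma> t)"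
  proof (intro nn_integral_mono_AE, unfold AE_measure_pmf_iff, intro ballI)
    fix z assume z: "z \<in> set_pmf (xi S P \<iota> T \<sigma> t)"
    show "hopt phi (map_option fst z) \<le> (\<integral>\<^sup>+y. hopt phi y \<partial>Kc S P T z)"
    proof (cases z)
      case None then show ?thesis by (simp add: hopt_def)
    next
      case (Some p)
      obtain s a where p: "p = (s, a)" by force
      have sa: "s \<in> S" "s \<notin> T" "a \<in> enabled S Act P s" using xi_supp[OF v] z Some p by auto
      have "(\<integral>\<^sup>+y. hopt phi y \<partial>Kc S P T z) = ennreal (\<Sum>s'\<in>S. P s a s' * (if s' \<in> T then 0 else phi s'))"
        using Some p nn_Kn[OF sa(1) sa(3) phi_nonneg] by (simp add: Kc_def)
      also have "(\<Sum>s'\<in>S. P s a s' * (if s' \<in> T then 0 else phi s')) = (\<Sum>s'\<in>S. P s a s' * phi s')"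
        by (intro sum.cong refl) (simp add: phi_def)
      finally have e: "(\<integral>\<^sup>+y. hopt phi y \<partial>Kc S P T z) = ennreal (\<Sum>s'\<in>S. P s a s' * phi s')" .
      show ?thesis
      proof (cases "s \<in> W")
        case True
        then have "phi s = 0" unfolding phi_def by simp
        then show ?thesis using Some p by (simp add: hopt_def)
      next
        case False
        then have "phi s \<le> (\<Sum>s'\<in>S. P s a s' * phi s')" using phi_step[OF _ sa(3)] sa by auto
        then show ?thesis using Some p e by (simp add: hopt_def ennreal_leI)
      qed
    qed
  qed
  also have "\<dots> = Phi \<sigma> (Suc t)"
    unfolding Phi_def M4 by simp
  finally show ?thesis .
qed

lemma Phi_mono:
  assumes v: "valid_strat S Act P \<sigma>" and "t \<le> t'"
  shows "Phi \<sigma> t \<le> Phi \<sigma> t'"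
  using assms(2)
proof (induction t' rule: dec_induct)
  case base then show ?case by simp
next
  case (step n) then show ?case using Phi_Suc[OF v, of n] by simp
qed

lemma alive_measure:
  "(\<integral>\<^sup>+y. indicator (-{None}) y \<partial>nu S P \<iota> T \<sigma> t) = ennreal (survive S P \<iota> T \<sigma> t)"
proof -
  have "(\<integral>\<^sup>+y. indicator (-{None}) y \<partial>nu S P \<iota> T \<sigma> t) = emeasure (nu S P \<iota> T \<sigma> t) (-{None})"
    by (simp add: nn_integral_indicator)
  also have "\<dots> = ennreal (measure (nu S P \<iota> T \<sigma> t) (-{None}))"
    by (simp add: measure_pmf.emeasure_eq_measure)
  also have "measure (nu S P \<iota> T \<sigma> t) (-{None}) = 1 - pmf (nu S P \<iota> T \<sigma> t) None"
    using measure_pmf.prob_compl[of "{None}" "nu S P \<iota> T \<sigma> t"]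
    by (simp add: measure_pmf_single Compl_eq_Diff_UNIV)
  finally show ?thesis unfolding survive_nu by simp
qed

lemma Phi_le_survive: "Phi \<sigma> t \<le> ennreal (survive S P \<iota> T \<sigma> t)"
  unfolding Phi_def alive_measure[symmetric]
  by (intro nn_integral_mono) (auto simp: hopt_def phi_le1 split: option.splits split_indicator)

lemma noescape:
  assumes v: "valid_strat S Act P \<sigma>" and lim: "(\<lambda>t. survive S P \<iota> T \<sigma> t) \<longlonglongrightarrow> 0"
    and s: "Some s \<in> set_pmf (nu S P \<iota> T \<sigma> t)"
  shows "s \<in> W"
proof (rule ccontr)
  assume nW: "s \<notin> W"
  from s have "Some s \<in> map_option fst ` set_pmf (agent_dist S P \<iota> T \<sigma> t)" by (simp add: nu_def)
  then obtain x where x: "x \<in> set_pmf (agent_dist S P \<iota> T \<sigma> t)" "Some s = map_option fst x" by blast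
  then obtain m where "x = Some (s, m)" by (cases x) auto
  then have sm: "Some (s, m) \<in> set_pmf (agent_dist S P \<iota> T \<sigma> t)" using x by simp
  have sS: "s \<in> S" using agent_dist_support[OF mdp v iS] sm by auto
  have sT: "s \<notin> T" using alive_notT[OF v sm] .
  define c where "c = pmf (nu S P \<iota> T \<sigma> t) (Some s) * phi s"
  have cpos: "0 < c" unfolding c_def using s phi_pos[of s] sS sT nW
    by (simp add: pmf_positive)
  have "ennreal c = hopt phi (Some s) * emeasure (nu S P \<iota> T \<sigma> t) {Some s}"
    unfolding c_def hopt_def using phi_nonneg[of s]
    by (simp add: emeasure_pmf_single ennreal_mult' mult.commute)
  also have "\<dots> = (\<integral>\<^sup>+y. hopt phi y * indicator {Some s} y \<partial>nu S P \<iota> T \<sigma> t)"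
    by (simp add: nn_integral_cmult_indicator[symmetric] mult.commute)
       (intro nn_integral_cong, simp split: split_indicator)
  also have "\<dots> \<le> Phi \<sigma> t"
    unfolding Phi_def by (intro nn_integral_mono) (simp split: split_indicator)
  finally have c1: "ennreal c \<le> Phi \<sigma> t" .
  have "c \<le> survive S P \<iota> T \<sigma> t'" if "t \<le> t'" for t'
  proof -
    have "ennreal c \<le> ennreal (survive S P \<iota> T \<sigma> t')"
      using c1 Phi_mono[OF v that] Phi_le_survive[of \<sigma> t'] by (meson order.trans)
    then show ?thesis by (subst (asm) ennreal_le_iff) (auto intro: survive_nonneg)
  qed
  moreover have "eventually (\<lambda>t'. survive S P \<iota> T \<sigma> t' < c) sequentially"
    using lim cpos by (rule order_tendstoD)
  then obtain t0 where "\<And>t'. t' \<ge> t0 \<Longrightarrow> survive S P \<iota> T \<sigma> t' < c"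
    unfolding eventually_sequentially by auto
  ultimately have "c < c" using le_add1[of t t0] le_add2[of t0 t] by fastforce
  then show False by simp
qed

lemma sim_valid:
  assumes v: "valid_strat S Act P \<sigma>" and fb: "\<And>s. s \<in> S \<Longrightarrow> fb s \<in> enabled S Act P s"
  shows "valid_strat S Act P (sim S P \<iota> T \<sigma> N fb)"
  unfolding valid_strat_def
proof (intro conjI ballI)
  show "set_pmf (init (sim S P \<iota> T \<sigma> N fb)) \<subseteq> mem (sim S P \<iota> T \<sigma> N fb)"
    by (simp add: sim_def)
  fix m s assume "m \<in> mem (sim S P \<iota> T \<sigma> N fb)" "s \<in> S"
  then show "set_pmf (upd (sim S P \<iota> T \<sigma> N fb) m s) \<subseteq> mem (sim S P \<iota> T \<sigma> N fb)"
    by (simp add: sim_def)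
next
  fix s m assume s: "s \<in> S" and m: "m \<in> mem (sim S P \<iota> T \<sigma> N fb)"
  show "set_pmf (act (sim S P \<iota> T \<sigma> N fb) s m) \<subseteq> enabled S Act P s"
  proof (cases "m < N")
    case False then show ?thesis using fb[OF s] by (simp add: sim_def)
  next
    case True
    let ?\<xi> = "xi S P \<iota> T \<sigma> m" and ?A = "{z. map_option fst z = Some s}"
    show ?thesis
    proof (cases "set_pmf ?\<xi> \<inter> ?A \<noteq> {}")
      case ne: True
      have "set_pmf (act (sim S P \<iota> T \<sigma> N fb) s m) = (\<lambda>z. snd (the z)) ` (set_pmf ?\<xi> \<inter> ?A)"
        using True ne by (simp add: sim_def simact_def set_cond_pmf[OF ne])
      also have "\<dots> \<subseteq> enabled S Act P s"
      proof
        fix a assume "a \<in> (\<lambda>z. snd (the z)) ` (set_pmf ?\<xi> \<inter> ?A)"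
        then obtain z where z: "z \<in> set_pmf ?\<xi>" "map_option fst z = Some s" "a = snd (the z)" by auto
        then have "z = Some (s, a)" by (cases z) auto
        then show "a \<in> enabled S Act P s" using xi_supp[OF v] z by auto
      qed
      finally show ?thesis .
    next
      case False then show ?thesis using True fb[OF s] by (simp add: sim_def simact_def)
    qed
  qed
qed

abbreviation "\<sigma>s \<sigma> N \<equiv> sim S P \<iota> T \<sigma> N fbk"

lemma stepN: "stepf S P T (\<sigma>s \<sigma> N) (Some (s, N)) = map_pmf (map_option (\<lambda>s'. (s', N))) (Kn S P T s (fbk s))"
proof -
  have ac: "act (\<sigma>s \<sigma> N) s N = return_pmf (fbk s)" by (simp add: sim_def)
  have up: "\<And>s'. upd (\<sigma>s \<sigma> N) N s' = return_pmf N" by (simp add: sim_def)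
  have "stepf S P T (\<sigma>s \<sigma> N) (Some (s, N)) =
     bind_pmf (trans_pmf S P s (fbk s)) (\<lambda>s'. return_pmf (if s' \<in> T then None else Some (s', N)))"
    by (simp only: stepf_def ac up option.case prod.case map_return_pmf bind_return_pmf)
  also have "\<dots> = map_pmf (\<lambda>s'. if s' \<in> T then None else Some (s', N)) (trans_pmf S P s (fbk s))"
    by (simp only: map_pmf_def)
  also have "\<dots> = map_pmf (map_option (\<lambda>s'. (s', N))) (Kn S P T s (fbk s))"
    unfolding Kn_def map_pmf_comp by (intro map_pmf_cong) auto
  finally show ?thesis .
qed

lemma supportN:
  assumes v: "valid_strat S Act P \<sigma>" and nW: "\<And>s. Some s \<in> set_pmf (nu S P \<iota> T \<sigma> N) \<Longrightarrow> s \<in> W"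
    and t: "N \<le> t"
  shows "set_pmf (agent_dist S P \<iota> T (\<sigma>s \<sigma> N) t) \<subseteq> insert None (Some ` (W \<times> {N}))"
  using t
proof (induction t rule: dec_induct)
  case base
  show ?case
  proof
    fix y assume "y \<in> set_pmf (agent_dist S P \<iota> T (\<sigma>s \<sigma> N) N)"
    then obtain xa where xa: "xa \<in> set_pmf (nu S P \<iota> T \<sigma> N)" "y = map_option (\<lambda>s. (s, N)) xa"
      by (auto simp: sim_dist)
    then show "y \<in> insert None (Some ` (W \<times> {N}))" using nW by (cases xa) auto
  qed
next
  case (step t)
  show ?case
  proof
    fix y assume "y \<in> set_pmf (agent_dist S P \<iota> T (\<sigma>s \<sigma> N) (Suc t))"
    then obtain x where x: "x \<in> set_pmf (agent_dist S P \<iota> T (\<sigma>s \<sigma> N) t)"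
      and y: "y \<in> set_pmf (stepf S P T (\<sigma>s \<sigma> N) x)"
      unfolding agent_dist_Suc2 by auto
    show "y \<in> insert None (Some ` (W \<times> {N}))"
    proof (cases x)
      case None then show ?thesis using y by simp
    next
      case (Some p)
      then obtain s where xs: "x = Some (s, N)" and sW: "s \<in> W" using step.IH x by auto
      have sS: "s \<in> S" using sW W_sub by auto
      have sf: "safe W s (fbk s)" using fbk_W[OF sW] by auto
      have aE: "fbk s \<in> enabled S Act P s" using fbk_en[OF sS] .
      have y': "y \<in> set_pmf (map_pmf (map_option (\<lambda>s'. (s', N))) (Kn S P T s (fbk s)))"
        using y xs by (simp only: stepN)
      obtain s' where s': "s' \<in> set_pmf (trans_pmf S P s (fbk s))"
        and yy: "y = map_option (\<lambda>s'. (s', N)) (if s' \<in> T then None else Some s')"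
        using y' unfolding Kn_def by auto
      have s'S: "s' \<in> S" using set_trans_pmf[OF mdp sS aE] s' by auto
      have "P s (fbk s) s' \<noteq> 0" using s' s'S trans_pmf_pmf[OF mdp sS aE, of s'] by (auto simp: set_pmf_iff)
      then have "s' \<in> W \<union> T" using sf s'S unfolding safe_def by auto
      then show ?thesis using yy by auto
    qed
  qed
qed

definition gopt :: "('s \<times> nat) option \<Rightarrow> ennreal" where
  "gopt x = (case x of None \<Rightarrow> 0 | Some (s, m) \<Rightarrow> ennreal (gfun s))"

definition Psi where "Psi \<sigma> N t = (\<integral>\<^sup>+x. gopt x \<partial>agent_dist S P \<iota> T (\<sigma>s \<sigma> N) t)"

lemma surv_int:
  "ennreal (survive S P \<iota> T \<sigma>' t) = (\<integral>\<^sup>+x. indicator (-{None}) (map_option fst x) \<partial>agent_dist S P \<iota> T \<sigma>' t)"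
  unfolding alive_measure[symmetric] nu_def by simp

lemma drift_int:
  assumes v: "valid_strat S Act P \<sigma>" and nW: "\<And>s. Some s \<in> set_pmf (nu S P \<iota> T \<sigma> N) \<Longrightarrow> s \<in> W"
    and t: "N \<le> t"
  shows "Psi \<sigma> N (Suc t) + ennreal (survive S P \<iota> T (\<sigma>s \<sigma> N) t) \<le> Psi \<sigma> N t"
proof -
  let ?\<mu> = "agent_dist S P \<iota> T (\<sigma>s \<sigma> N) t"
  have "Psi \<sigma> N (Suc t) + ennreal (survive S P \<iota> T (\<sigma>s \<sigma> N) t) =
    (\<integral>\<^sup>+x. (\<integral>\<^sup>+y. gopt y \<partial>stepf S P T (\<sigma>s \<sigma> N) x) \<partial>?\<mu>) + (\<integral>\<^sup>+x. indicator (-{None}) (map_option fst x) \<partial>?\<mu>)"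
    unfolding Psi_def surv_int agent_dist_Suc2 by simp
  also have "\<dots> = (\<integral>\<^sup>+x. (\<integral>\<^sup>+y. gopt y \<partial>stepf S P T (\<sigma>s \<sigma> N) x) + indicator (-{None}) (map_option fst x) \<partial>?\<mu>)"
    by (rule nn_integral_add[symmetric]) auto
  also have "\<dots> \<le> (\<integral>\<^sup>+x. gopt x \<partial>?\<mu>)"
  proof (intro nn_integral_mono_AE, unfold AE_measure_pmf_iff, intro ballI)
    fix x assume x: "x \<in> set_pmf ?\<mu>"
    show "(\<integral>\<^sup>+y. gopt y \<partial>stepf S P T (\<sigma>s \<sigma> N) x) + indicator (-{None}) (map_option fst x) \<le> gopt x"
    proof (cases x)
      case None then show ?thesis by (simp add: gopt_def)
    next
      case (Some p)
      then obtain s where xs: "x = Some (s, N)" and sW: "s \<in> W" using supportN[OF v nW t] x by auto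
      have sS: "s \<in> S" using sW W_sub by auto
      have aE: "fbk s \<in> enabled S Act P s" using fbk_en[OF sS] .
      have gg: "\<And>y. gopt (map_option (\<lambda>s'. (s', N)) y) = hopt gfun y"
        by (simp add: gopt_def hopt_def split: option.splits)
      have "(\<integral>\<^sup>+y. gopt y \<partial>stepf S P T (\<sigma>s \<sigma> N) x) = (\<integral>\<^sup>+y. hopt gfun y \<partial>Kn S P T s (fbk s))"
        unfolding xs stepN by (simp add: gg)
      also have "\<dots> = ennreal (\<Sum>s'\<in>S. P s (fbk s) s' * (if s' \<in> T then 0 else gfun s'))"
        by (rule nn_Kn[OF sS aE gfun_nonneg])
      finally have e: "(\<integral>\<^sup>+y. gopt y \<partial>stepf S P T (\<sigma>s \<sigma> N) x) = ennreal (\<Sum>s'\<in>S. P s (fbk s) s' * (if s' \<in> T then 0 else gfun s'))" .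
      have nn: "0 \<le> (\<Sum>s'\<in>S. P s (fbk s) s' * (if s' \<in> T then 0 else gfun s'))"
        using Pnn[OF sS en_Act[OF aE]] gfun_nonneg by (intro sum_nonneg) auto
      have "ennreal (\<Sum>s'\<in>S. P s (fbk s) s' * (if s' \<in> T then 0 else gfun s')) + 1
         = ennreal ((\<Sum>s'\<in>S. P s (fbk s) s' * (if s' \<in> T then 0 else gfun s')) + 1)"
        using nn by (simp add: ennreal_plus)
      also have "\<dots> \<le> ennreal (gfun s)" using drift[OF sW] by (intro ennreal_leI) simp
      finally show ?thesis unfolding e using xs by (simp add: gopt_def)
    qed
  qed
  finally show ?thesis unfolding Psi_def .
qed

lemma sum_bound:
  assumes v: "valid_strat S Act P \<sigma>" and nW: "\<And>s. Some s \<in> set_pmf (nu S P \<iota> T \<sigma> N) \<Longrightarrow> s \<in> W"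
  shows "Psi \<sigma> N (N + M) + (\<Sum>t<M. ennreal (survive S P \<iota> T (\<sigma>s \<sigma> N) (N + t))) \<le> Psi \<sigma> N N"
proof (induction M)
  case 0 then show ?case by simp
next
  case (Suc M)
  have "Psi \<sigma> N (N + Suc M) + (\<Sum>t<Suc M. ennreal (survive S P \<iota> T (\<sigma>s \<sigma> N) (N + t)))
     = (Psi \<sigma> N (Suc (N + M)) + ennreal (survive S P \<iota> T (\<sigma>s \<sigma> N) (N + M)))
       + (\<Sum>t<M. ennreal (survive S P \<iota> T (\<sigma>s \<sigma> N) (N + t)))"
    by (simp add: add_ac)
  also have "\<dots> \<le> Psi \<sigma> N (N + M) + (\<Sum>t<M. ennreal (survive S P \<iota> T (\<sigma>s \<sigma> N) (N + t)))"
    by (intro add_right_mono drift_int[OF v nW] le_add1)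
  also have "\<dots> \<le> Psi \<sigma> N N" by (rule Suc.IH)
  finally show ?case .
qed

lemma Psi_N: "Psi \<sigma> N N \<le> ennreal G * ennreal (survive S P \<iota> T (\<sigma>s \<sigma> N) N)"
proof -
  have "Psi \<sigma> N N \<le> (\<integral>\<^sup>+x. ennreal G * indicator (-{None}) (map_option fst x) \<partial>agent_dist S P \<iota> T (\<sigma>s \<sigma> N) N)"
    unfolding Psi_def
    by (intro nn_integral_mono) (auto simp: gopt_def gfun_le_G ennreal_leI split: option.splits)
  also have "\<dots> = ennreal G * ennreal (survive S P \<iota> T (\<sigma>s \<sigma> N) N)"
    unfolding surv_int by (rule nn_integral_cmult) auto
  finally show ?thesis .
qed

lemma tail:
  assumes v: "valid_strat S Act P \<sigma>" and nW: "\<And>s. Some s \<in> set_pmf (nu S P \<iota> T \<sigma> N) \<Longrightarrow> s \<in> W"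
  shows "(\<Sum>t<M. ennreal (survive S P \<iota> T (\<sigma>s \<sigma> N) (N + t))) \<le> ennreal (G * survive S P \<iota> T \<sigma> N)"
proof -
  have "(\<Sum>t<M. ennreal (survive S P \<iota> T (\<sigma>s \<sigma> N) (N + t)))
      \<le> Psi \<sigma> N (N + M) + (\<Sum>t<M. ennreal (survive S P \<iota> T (\<sigma>s \<sigma> N) (N + t)))"
    by (rule add_increasing) auto
  also have "\<dots> \<le> Psi \<sigma> N N" by (rule sum_bound[OF v nW])
  also have "\<dots> \<le> ennreal G * ennreal (survive S P \<iota> T (\<sigma>s \<sigma> N) N)" by (rule Psi_N)
  also have "survive S P \<iota> T (\<sigma>s \<sigma> N) N = survive S P \<iota> T \<sigma> N"
    by (rule sim_survive) simp
  also have "ennreal G * ennreal (survive S P \<iota> T \<sigma> N) = ennreal (G * survive S P \<iota> T \<sigma> N)"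
    by (rule ennreal_mult[symmetric]) (auto intro: G_nonneg survive_nonneg)
  finally show ?thesis .
qed

end

lemma prod_le_factor:
  fixes f :: "nat \<Rightarrow> real"
  assumes "\<And>i. i < k \<Longrightarrow> 0 \<le> f i \<and> f i \<le> 1" "j < k"
  shows "(\<Prod>i<k. f i) \<le> f j"
proof -
  have "(\<Prod>i<k. f i) = f j * (\<Prod>i\<in>{..<k} - {j}. f i)"
    using assms(2) by (simp add: prod.remove)
  also have "\<dots> \<le> f j * 1"
    using assms by (intro mult_left_mono prod_le_1) auto
  finally show ?thesis by simp
qed

lemma prod_nonneg_le1:
  fixes f :: "nat \<Rightarrow> real"
  assumes "\<And>i. i < k \<Longrightarrow> 0 \<le> f i \<and> f i \<le> 1"
  shows "0 \<le> (\<Prod>i<k. f i)"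
  using assms by (intro prod_nonneg) auto

lemma agt2I:
  assumes "is_mssp S Act P k iota T" "i < k"
  shows "agt2 S Act P (T i) (iota i)"
  using assms unfolding is_mssp_def agt2_def agt2_axioms_def agt_def by auto

theorem part2:
  "\<forall>(S :: 's set) (Act :: 'a set) P k iota T (\<epsilon> :: real).
            is_mssp S Act P k iota T \<and> \<epsilon> > 0 \<longrightarrow>
            (\<exists>\<pi> :: nat \<Rightarrow> ('s, 'a, nat) strat.
               valid_profile S Act P k \<pi> \<and> finite_memory k \<pi>
             \<and> E_MHit S P k iota T \<pi>
                 \<le> (INF \<pi>' \<in> {\<pi>' :: nat \<Rightarrow> ('s, 'a, 'm) strat. valid_profile S Act P k \<pi>'}.
                      E_MHit S P k iota T \<pi>') + ennreal \<epsilon>)"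
proof (intro allI impI, elim conjE)
  fix S :: "'s set" and Act :: "'a set" and P k iota T and \<epsilon> :: real
  assume ms: "is_mssp S Act P k iota T" and ep: "\<epsilon> > 0"
  have mdp: "is_mdp S Act P" using ms unfolding is_mssp_def by auto
  note A = agt2I[OF ms]
  define fb where "fb i = agt.fbk S Act P (T i)" for i
  have fbE: "\<And>i s. i < k \<Longrightarrow> s \<in> S \<Longrightarrow> fb i s \<in> enabled S Act P s"
  proof -
    fix i s assume i: "i < k" and s: "s \<in> S"
    interpret agt2 S Act P "T i" "iota i" using A[OF i] .
    show "fb i s \<in> enabled S Act P s" unfolding fb_def using fbk_en[OF s] .
  qed
  let ?INF = "(INF \<pi>' \<in> {\<pi>' :: nat \<Rightarrow> ('s, 'a, 'm) strat. valid_profile S Act P k \<pi>'}.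
                      E_MHit S P k iota T \<pi>')"
  let ?E = "\<lambda>\<pi>. E_MHit S P k iota T \<pi>"
  show "\<exists>\<pi> :: nat \<Rightarrow> ('s, 'a, nat) strat.
               valid_profile S Act P k \<pi> \<and> finite_memory k \<pi> \<and> ?E \<pi> \<le> ?INF + ennreal \<epsilon>"
  proof (cases "?INF = top")
    case True
    define \<pi> where "\<pi> i = \<lparr>mem = {0::nat}, init = return_pmf 0, act = (\<lambda>s m. return_pmf (fb i s)),
        upd = (\<lambda>m s. return_pmf 0)\<rparr>" for i
    have "valid_profile S Act P k \<pi>" unfolding valid_profile_def valid_strat_def \<pi>_def using fbE by auto
    moreover have "finite_memory k \<pi>" unfolding finite_memory_def \<pi>_def by simp
    ultimately show ?thesis using True by auto
  next
    case False
    have "?INF < ?INF + ennreal (\<epsilon> / 2)"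
      using False ep by (simp add: top.not_eq_extremum ennreal_add_left_cancel_less[of _ 0, simplified])
    then obtain \<pi>' :: "nat \<Rightarrow> ('s, 'a, 'm) strat" where vp': "valid_profile S Act P k \<pi>'"
      and E': "?E \<pi>' < ?INF + ennreal (\<epsilon> / 2)"
      unfolding INF_less_iff by auto
    have v': "\<And>i. i < k \<Longrightarrow> valid_strat S Act P (\<pi>' i)" using vp' unfolding valid_profile_def by auto
    define sv1 where "sv1 i t = survive S P (iota i) (T i) (\<pi>' i) t" for i t
    have sv01: "\<And>i t. 0 \<le> sv1 i t \<and> sv1 i t \<le> 1"
      unfolding sv1_def using survive_nonneg survive_le1 by auto
    have Etop: "?E \<pi>' \<noteq> top"
    proof -
      have "?INF + ennreal (\<epsilon> / 2) < top"
        using False by (metis ennreal_add_less_top ennreal_less_top top.not_eq_extremum)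
      with E' have "?E \<pi>' < top" by (rule less_trans)
      then show ?thesis by simp
    qed
    have summ: "summable (\<lambda>t. \<Prod>i<k. sv1 i t)"
      using Etop sv01 unfolding E_MHit_def prob_MHit_gt_def sv1_def
      by (intro summable_suminf_not_top) (auto intro: prod_nonneg)
    then have p0: "(\<lambda>t. \<Prod>i<k. sv1 i t) \<longlonglongrightarrow> 0" by (rule summable_LIMSEQ_zero)
    have lim: "(\<lambda>t. sv1 i t) \<longlonglongrightarrow> (INF t. sv1 i t)" for i
    proof (rule LIMSEQ_decseq_INF)
      show "bdd_below (range (\<lambda>t. sv1 i t))" using sv01 by (auto intro: bdd_belowI[of _ 0])
      show "decseq (\<lambda>t. sv1 i t)" unfolding sv1_def by (intro decseq_SucI survive_antimono) simp
    qed
    have "(\<lambda>t. \<Prod>i<k. sv1 i t) \<longlonglongrightarrow> (\<Prod>i<k. (INF t. sv1 i t))"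
      by (intro tendsto_prod lim)
    then have "(\<Prod>i<k. (INF t. sv1 i t)) = 0" using p0 by (rule LIMSEQ_unique)
    then obtain j where j: "j < k" and Lj: "(INF t. sv1 j t) = 0"
      by (auto simp: prod_zero_iff)
    have limj: "(\<lambda>t. sv1 j t) \<longlonglongrightarrow> 0" using lim[of j] Lj by simp
    interpret aj: agt2 S Act P "T j" "iota j" using A[OF j] .
    have nW: "\<And>N s. Some s \<in> set_pmf (nu S P (iota j) (T j) (\<pi>' j) N) \<Longrightarrow> s \<in> aj.W"
      using aj.noescape[OF v'[OF j] limj[unfolded sv1_def]] by blast
    have "(\<lambda>t. aj.G * sv1 j t) \<longlonglongrightarrow> aj.G * 0" by (intro tendsto_mult limj tendsto_const)
    then have "eventually (\<lambda>t. aj.G * sv1 j t < \<epsilon> / 2) sequentially"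
      using ep by (intro order_tendstoD) auto
    then obtain N where N: "aj.G * sv1 j N < \<epsilon> / 2"
      unfolding eventually_sequentially by auto
    define \<pi> where "\<pi> i = sim S P (iota i) (T i) (\<pi>' i) N (fb i)" for i
    define sv2 where "sv2 i t = survive S P (iota i) (T i) (\<pi> i) t" for i t
    have vp: "valid_profile S Act P k \<pi>"
      unfolding valid_profile_def \<pi>_def
      using A v' fbE by (auto intro!: agt2.sim_valid)
    have fm: "finite_memory k \<pi>" unfolding finite_memory_def \<pi>_def by (simp add: sim_def)
    have sv01': "\<And>i t. 0 \<le> sv2 i t \<and> sv2 i t \<le> 1"
      unfolding sv2_def using survive_nonneg survive_le1 by auto
    have same: "t \<le> N \<Longrightarrow> sv2 i t = sv1 i t" for i t
      unfolding sv1_def sv2_def \<pi>_def by (rule sim_survive)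
    have \<pi>j: "\<pi> j = sim S P (iota j) (T j) (\<pi>' j) N aj.fbk" unfolding \<pi>_def fb_def ..
    have Eeq: "?E \<pi> = (\<Sum>t. ennreal (\<Prod>i<k. sv2 i (t + N))) + (\<Sum>t<N. ennreal (\<Prod>i<k. sv2 i t))"
      unfolding E_MHit_def prob_MHit_gt_def sv2_def by (rule suminf_offset) (rule summableI)
    have first: "(\<Sum>t<N. ennreal (\<Prod>i<k. sv2 i t)) \<le> ?E \<pi>'"
    proof -
      have "(\<Sum>t<N. ennreal (\<Prod>i<k. sv2 i t)) = (\<Sum>t<N. ennreal (\<Prod>i<k. sv1 i t))"
        using same by (intro sum.cong refl) simp
      also have "\<dots> \<le> ?E \<pi>'"
        unfolding E_MHit_def prob_MHit_gt_def sv1_def by (intro sum_le_suminf) auto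
      finally show ?thesis .
    qed
    have second: "(\<Sum>t. ennreal (\<Prod>i<k. sv2 i (t + N))) \<le> ennreal (\<epsilon> / 2)"
    proof -
      have "(\<Sum>t. ennreal (\<Prod>i<k. sv2 i (t + N))) \<le> (\<Sum>t. ennreal (sv2 j (t + N)))"
        using sv01' j by (intro suminf_le ennreal_leI prod_le_factor) auto
      also have "\<dots> = (SUP M. \<Sum>t<M. ennreal (sv2 j (t + N)))" by (rule suminf_eq_SUP)
      also have "\<dots> \<le> ennreal (aj.G * sv1 j N)"
      proof (rule SUP_least)
        fix M
        show "(\<Sum>t<M. ennreal (sv2 j (t + N))) \<le> ennreal (aj.G * sv1 j N)"
          using aj.tail[OF v'[OF j] nW, where N=N and M=M] unfolding sv1_def sv2_def \<pi>j by (simp add: add.commute)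
      qed
      also have "\<dots> \<le> ennreal (\<epsilon> / 2)" using N by (intro ennreal_leI) simp
      finally show ?thesis .
    qed
    have "?E \<pi> \<le> ennreal (\<epsilon> / 2) + ?E \<pi>'" unfolding Eeq by (intro add_mono first second)
    also have "\<dots> \<le> ennreal (\<epsilon> / 2) + (?INF + ennreal (\<epsilon> / 2))" using E' by (intro add_mono) auto
    also have "\<dots> = ?INF + ennreal \<epsilon>"
      using ep by (simp add: add_ac ennreal_plus[symmetric] del: ennreal_plus)
    finally show ?thesis using vp fm by blast
  qed
qed

theorem mainTheorem4:
  shows "(\<forall>n::nat. n \<ge> 1 \<longrightarrow>
            (\<exists>(S :: nat set) (Act :: nat set) P iota T (\<pi> :: nat \<Rightarrow> (nat, nat, nat) strat).
               is_mssp S Act P 2 iota T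
             \<and> valid_profile S Act P 2 \<pi> \<and> mem_bounded (n + 1) 2 \<pi>
             \<and> E_MHit S P 2 iota T \<pi>
                 < (INF \<pi>' \<in> {\<pi>' :: nat \<Rightarrow> (nat, nat, nat) strat.
                                 valid_profile S Act P 2 \<pi>' \<and> mem_bounded n 2 \<pi>'}.
                      E_MHit S P 2 iota T \<pi>')))
       \<and> (\<forall>(S :: 's set) (Act :: 'a set) P k iota T (\<epsilon> :: real).
            is_mssp S Act P k iota T \<and> \<epsilon> > 0 \<longrightarrow>
            (\<exists>\<pi> :: nat \<Rightarrow> ('s, 'a, nat) strat.
               valid_profile S Act P k \<pi> \<and> finite_memory k \<pi>
             \<and> E_MHit S P k iota T \<pi>
                 \<le> (INF \<pi>' \<in> {\<pi>' :: nat \<Rightarrow> ('s, 'a, 'm) strat. valid_profile S Act P k \<pi>'}.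
                      E_MHit S P k iota T \<pi>') + ennreal \<epsilon>))"
    using part1 part2 by blast

end
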